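(* Let $\pi:V\to X$ be a finite-dimensional diffeological vector pseudo-bundle with a connection $\nabla$, and let $t\in C^\infty(X,(\Lambda^1(X))^* )$. Then the map $\nabla_t:C^\infty(X,V)\to C^\infty(X,V)$, $s\mapsto\nabla_ts$, is smooth for the functional diffeology on $C^\infty(X,V)$.
   Context: Diffeological spaces, smooth maps, and the functional diffeology on $C^\infty(A,B)$ ($q:U\to C^\infty(A,B)$ is a plot iff $(u,u')\mapsto q(u)(p(u'))$ is a plot of $B$ for every plot $p:U'\to A$) are as usual. A diffeological vector pseudo-bundle is a smooth surjection with vector space fibres whose fibrewise operations and zero section are smooth; tensor products carry the tensor product pseudo-bundle diffeology. The dual pseudo-bundle $W^*\to X$ of $W\to X$ has fibres the spaces of smooth linear functionals on the fibres, and a map $p:U\to W^*$ is a plot iff for every plot $q:U'\to W$ the map $(u,u')\mapsto p(u)(q(u'))$, defined where the base points agree, is smooth. $\Omega^1(X)$: a 1-form assigns to each plot $p:U\to X$ an ordinary 1-form $\omega(p)$ on $U$ with $\omega(p\circ F)=F^*\omega(p)$ for smooth $F$; functional diffeology. $\omega$ vanishes at $x$ if $\omega(p)(0)=0$ for all plots with $p(0)=x$. $\Lambda^1(X)$ is the quotient of $X\times\Omega^1(X)$ by the sub-bundle $\bigcup_x\{x\}\times\Omega^1_x(X)$ of vanishing forms, with quotient diffeology and projection $\pi^{\Omega,\Lambda}$. For smooth $h:X\to\mathbb{R}$, $dh$ is the section $x\mapsto\pi^{\Omega,\Lambda}(x,dh)$ with $dh(p)=d(h\circ p)$. A connection on $V$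 is a smooth linear operator $\nabla:C^\infty(X,V)\to C^\infty(X,\Lambda^1(X)\otimes V)$ with $\nabla(hs)=dh\otimes s+h\nabla s$. For $t\in C^\infty(X,(\Lambda^1(X))^* )$, the covariant derivative $\nabla_ts$ is the section $x\mapsto(t(x)\otimes\mathrm{Id})((\nabla s)(x))$, i.e. $\nabla s$ evaluated on $t$; it is a smooth section of $V$. *)

theory Defs
  imports "HOL-Analysis.Analysis"
begin

type_synonym pt = "nat \<Rightarrow> real"

text \<open>R^n is encoded as the points of nat => real vanishing from index n on;
  the product topology on nat => real restricts to the Euclidean topology there.\<close>
definition euclid :: "nat \<Rightarrow> pt set" where
  "euclid n = {x. \<forall>i\<ge>n. x i = 0}"

definition domain :: "nat \<Rightarrow> pt set \<Rightarrow> bool" where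
  "domain n U \<longleftrightarrow> U \<subseteq> euclid n \<and> openin (top_of_set (euclid n)) U"

definition pdiff :: "nat \<Rightarrow> (pt \<Rightarrow> real) \<Rightarrow> pt \<Rightarrow> real" where
  "pdiff i f x = deriv (\<lambda>h. f (x(i := x i + h))) 0"

fun ipdiff :: "nat list \<Rightarrow> (pt \<Rightarrow> real) \<Rightarrow> pt \<Rightarrow> real" where
  "ipdiff [] f = f"
| "ipdiff (i # is) f = pdiff i (ipdiff is f)"

definition smooth_fun :: "nat \<Rightarrow> pt set \<Rightarrow> (pt \<Rightarrow> real) \<Rightarrow> bool" where
  "smooth_fun n U f \<longleftrightarrow>
     (\<forall>is. set is \<subseteq> {..<n} \<longrightarrow> continuous_on U (ipdiff is f) \<and>
        (\<forall>i<n. \<forall>x\<in>U. (\<lambda>h. ipdiff is f (x(i := x i + h))) differentiable (at 0)))"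

definition smooth_map :: "nat \<Rightarrow> pt set \<Rightarrow> nat \<Rightarrow> pt set \<Rightarrow> (pt \<Rightarrow> pt) \<Rightarrow> bool" where
  "smooth_map m W n U F \<longleftrightarrow> F ` W \<subseteq> U \<and> (\<forall>i<n. smooth_fun m W (\<lambda>w. F w i))"

text \<open>Product U x U' of domains in R^(n+m): first n coordinates in U, next m in U'.\<close>
definition pfst :: "nat \<Rightarrow> pt \<Rightarrow> pt" where
  "pfst n z = (\<lambda>i. if i < n then z i else 0)"

definition psnd :: "nat \<Rightarrow> pt \<Rightarrow> pt" where
  "psnd n z = (\<lambda>i. z (i + n))"

definition dom_prod :: "nat \<Rightarrow> pt set \<Rightarrow> nat \<Rightarrow> pt set \<Rightarrow> pt set" where
  "dom_prod n U m W = {z \<in> euclid (n + m). pfst n z \<in> U \<and> psnd n z \<in> W}"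

type_synonym 'a plots = "nat \<Rightarrow> pt set \<Rightarrow> (pt \<Rightarrow> 'a) \<Rightarrow> bool"
type_synonym 'a dspace = "'a set \<times> 'a plots"

definition diffeological :: "'a dspace \<Rightarrow> bool" where
  "diffeological S \<longleftrightarrow>
     (\<forall>n U p. snd S n U p \<longrightarrow> domain n U \<and> p ` U \<subseteq> fst S) \<and>
     (\<forall>n U p q. snd S n U p \<and> (\<forall>u\<in>U. p u = q u) \<longrightarrow> snd S n U q) \<and>
     (\<forall>n U x. domain n U \<and> x \<in> fst S \<longrightarrow> snd S n U (\<lambda>_. x)) \<and>
     (\<forall>n U p. domain n U \<and> p ` U \<subseteq> fst S \<and>
        (\<forall>u\<in>U. \<exists>V. u \<in> V \<and> V \<subseteq> U \<and> domain n V \<and> snd S n V p) \<longrightarrow> snd S n U p) \<and>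
     (\<forall>n U p m W F. snd S n U p \<and> domain m W \<and> smooth_map m W n U F \<longrightarrow> snd S m W (p \<circ> F))"

definition real_ds :: "real dspace" where
  "real_ds = (UNIV, \<lambda>n U f. domain n U \<and> smooth_fun n U f)"

definition dsmooth :: "'a dspace \<Rightarrow> 'b dspace \<Rightarrow> ('a \<Rightarrow> 'b) \<Rightarrow> bool" where
  "dsmooth S T f \<longleftrightarrow> f ` fst S \<subseteq> fst T \<and> (\<forall>n U p. snd S n U p \<longrightarrow> snd T n U (f \<circ> p))"

definition subspace :: "'a dspace \<Rightarrow> 'a set \<Rightarrow> 'a dspace" where
  "subspace S A = (fst S \<inter> A, \<lambda>n U p. snd S n U p \<and> p ` U \<subseteq> A)"

definition prod_ds :: "'a dspace \<Rightarrow> 'b dspace \<Rightarrow> ('a \<times> 'b) dspace" where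
  "prod_ds S T = (fst S \<times> fst T, \<lambda>n U p. snd S n U (fst \<circ> p) \<and> snd T n U (snd \<circ> p))"

text \<open>C^infinity(A,B) with the functional diffeology (maps are taken extensional on A).\<close>
definition smooth_maps :: "'a dspace \<Rightarrow> 'b dspace \<Rightarrow> ('a \<Rightarrow> 'b) set" where
  "smooth_maps S T = {f. dsmooth S T f \<and> f \<in> extensional (fst S)}"

definition fun_ds :: "'a dspace \<Rightarrow> 'b dspace \<Rightarrow> ('a \<Rightarrow> 'b) dspace" where
  "fun_ds S T = (smooth_maps S T,
     \<lambda>n U q. domain n U \<and> q ` U \<subseteq> smooth_maps S T \<and>
       (\<forall>m W p. snd S m W p \<longrightarrow>
          snd T (n + m) (dom_prod n U m W) (\<lambda>z. q (pfst n z) (p (psnd n z)))))"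

record ('a, 'v) vpb =
  base :: "'a dspace"
  total :: "'v dspace"
  proj :: "'v \<Rightarrow> 'a"
  vadd :: "'v \<Rightarrow> 'v \<Rightarrow> 'v"
  vsmul :: "real \<Rightarrow> 'v \<Rightarrow> 'v"
  vzero :: "'a \<Rightarrow> 'v"

definition fibre :: "('a, 'v, 'z) vpb_scheme \<Rightarrow> 'a \<Rightarrow> 'v set" where
  "fibre E x = {v \<in> fst (total E). proj E v = x}"

definition vspace :: "'v set \<Rightarrow> ('v \<Rightarrow> 'v \<Rightarrow> 'v) \<Rightarrow> (real \<Rightarrow> 'v \<Rightarrow> 'v) \<Rightarrow> 'v \<Rightarrow> bool" where
  "vspace S add smul z \<longleftrightarrow> z \<in> S \<and> (\<forall>u\<in>S. \<forall>v\<in>S. add u v \<in> S) \<and> (\<forall>a. \<forall>v\<in>S. smul a v \<in> S) \<and>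
     (\<forall>u\<in>S. \<forall>v\<in>S. \<forall>w\<in>S. add (add u v) w = add u (add v w)) \<and>
     (\<forall>u\<in>S. \<forall>v\<in>S. add u v = add v u) \<and>
     (\<forall>v\<in>S. add z v = v) \<and> (\<forall>v\<in>S. add v (smul (-1) v) = z) \<and>
     (\<forall>a b. \<forall>v\<in>S. smul a (smul b v) = smul (a * b) v) \<and> (\<forall>v\<in>S. smul 1 v = v) \<and>
     (\<forall>a. \<forall>u\<in>S. \<forall>v\<in>S. smul a (add u v) = add (smul a u) (smul a v)) \<and>
     (\<forall>a b. \<forall>v\<in>S. smul (a + b) v = add (smul a v) (smul b v))"

fun lcomb :: "('v \<Rightarrow> 'v \<Rightarrow> 'v) \<Rightarrow> (real \<Rightarrow> 'v \<Rightarrow> 'v) \<Rightarrow> 'v \<Rightarrow> (real \<times> 'v) list \<Rightarrow> 'v" where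
  "lcomb add smul z [] = z"
| "lcomb add smul z ((a, v) # xs) = add (smul a v) (lcomb add smul z xs)"

definition fin_dim :: "'v set \<Rightarrow> ('v \<Rightarrow> 'v \<Rightarrow> 'v) \<Rightarrow> (real \<Rightarrow> 'v \<Rightarrow> 'v) \<Rightarrow> 'v \<Rightarrow> bool" where
  "fin_dim S add smul z \<longleftrightarrow>
     (\<exists>bs. set bs \<subseteq> S \<and> (\<forall>v\<in>S. \<exists>cs. length cs = length bs \<and> v = lcomb add smul z (zip cs bs)))"

definition fibred_prod :: "('a, 'v, 'z) vpb_scheme \<Rightarrow> ('a, 'w, 'y) vpb_scheme \<Rightarrow> ('v \<times> 'w) dspace" where
  "fibred_prod E F = subspace (prod_ds (total E) (total F)) {(v, w). proj E v = proj F w}"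

definition is_vpb :: "('a, 'v, 'z) vpb_scheme \<Rightarrow> bool" where
  "is_vpb E \<longleftrightarrow> diffeological (base E) \<and> diffeological (total E) \<and>
     dsmooth (total E) (base E) (proj E) \<and> proj E ` fst (total E) = fst (base E) \<and>
     (\<forall>x\<in>fst (base E). vspace (fibre E x) (vadd E) (vsmul E) (vzero E x)) \<and>
     dsmooth (fibred_prod E E) (total E) (\<lambda>uv. vadd E (fst uv) (snd uv)) \<and>
     dsmooth (prod_ds real_ds (total E)) (total E) (\<lambda>av. vsmul E (fst av) (snd av)) \<and>
     dsmooth (base E) (total E) (vzero E)"

definition fin_dim_vpb :: "('a, 'v, 'z) vpb_scheme \<Rightarrow> bool" where
  "fin_dim_vpb E \<longleftrightarrow> is_vpb E \<and>
     (\<forall>x\<in>fst (base E). fin_dim (fibre E x) (vadd E) (vsmul E) (vzero E x))"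

definition sections_ds :: "('a, 'v, 'z) vpb_scheme \<Rightarrow> ('a \<Rightarrow> 'v) dspace" where
  "sections_ds E = subspace (fun_ds (base E) (total E)) {s. \<forall>x\<in>fst (base E). proj E (s x) = x}"

text \<open>A 1-form assigns to each plot (n,U,p) the coefficient functions of an ordinary 1-form on U.\<close>
type_synonym 'a form = "nat \<Rightarrow> pt set \<Rightarrow> (pt \<Rightarrow> 'a) \<Rightarrow> pt \<Rightarrow> pt"

definition is_form :: "'a dspace \<Rightarrow> 'a form \<Rightarrow> bool" where
  "is_form S \<omega> \<longleftrightarrow>
     (\<forall>n U p. \<not> snd S n U p \<longrightarrow> \<omega> n U p = (\<lambda>u. undefined)) \<and>
     (\<forall>n U p. snd S n U p \<longrightarrow> (\<forall>u. u \<notin> U \<longrightarrow> \<omega> n U p u = undefined) \<and>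
        (\<forall>u\<in>U. \<omega> n U p u \<in> euclid n) \<and> (\<forall>i<n. smooth_fun n U (\<lambda>u. \<omega> n U p u i))) \<and>
     (\<forall>n U p q. snd S n U p \<and> (\<forall>u\<in>U. p u = q u) \<longrightarrow> \<omega> n U q = \<omega> n U p) \<and>
     (\<forall>n U p m W F. snd S n U p \<and> domain m W \<and> smooth_map m W n U F \<longrightarrow>
        (\<forall>w\<in>W. \<omega> m W (p \<circ> F) w =
           (\<lambda>j. if j < m then (\<Sum>i<n. \<omega> n U p (F w) i * pdiff j (\<lambda>v. F v i) w) else 0)))"

definition forms :: "'a dspace \<Rightarrow> 'a form set" where
  "forms S = {\<omega>. is_form S \<omega>}"

definition forms_ds :: "'a dspace \<Rightarrow> 'a form dspace" where
  "forms_ds S = (forms S, \<lambda>k R q. domain k R \<and> q ` R \<subseteq> forms S \<and>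
     (\<forall>n U p. snd S n U p \<longrightarrow>
        (\<forall>i<n. smooth_fun (k + n) (dom_prod k R n U) (\<lambda>z. q (pfst k z) n U p (psnd k z) i))))"

definition fadd :: "'a dspace \<Rightarrow> 'a form \<Rightarrow> 'a form \<Rightarrow> 'a form" where
  "fadd S \<omega> \<eta> = (\<lambda>n U p u. if snd S n U p \<and> u \<in> U then (\<lambda>i. \<omega> n U p u i + \<eta> n U p u i) else undefined)"

definition fsmul :: "'a dspace \<Rightarrow> real \<Rightarrow> 'a form \<Rightarrow> 'a form" where
  "fsmul S a \<omega> = (\<lambda>n U p u. if snd S n U p \<and> u \<in> U then (\<lambda>i. a * \<omega> n U p u i) else undefined)"

definition fzero :: "'a dspace \<Rightarrow> 'a form" where
  "fzero S = (\<lambda>n U p u. if snd S n U p \<and> u \<in> U then (\<lambda>i. 0) else undefined)"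

definition vanishes_at :: "'a dspace \<Rightarrow> 'a form \<Rightarrow> 'a \<Rightarrow> bool" where
  "vanishes_at S \<omega> x \<longleftrightarrow> (\<forall>n U p. snd S n U p \<and> (\<lambda>_. 0) \<in> U \<and> p (\<lambda>_. 0) = x \<longrightarrow>
       \<omega> n U p (\<lambda>_. 0) = (\<lambda>_. 0))"

text \<open>Lambda^1(X): pairs (x, class of omega modulo forms vanishing at x).\<close>
definition lclass :: "'a dspace \<Rightarrow> 'a \<Rightarrow> 'a form \<Rightarrow> 'a form set" where
  "lclass S x \<omega> = {\<eta> \<in> forms S. vanishes_at S (fadd S \<eta> (fsmul S (-1) \<omega>)) x}"

definition piOL :: "'a dspace \<Rightarrow> 'a \<times> 'a form \<Rightarrow> 'a \<times> 'a form set" where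
  "piOL S xw = (fst xw, lclass S (fst xw) (snd xw))"

definition Lambda_ds :: "'a dspace \<Rightarrow> ('a \<times> 'a form set) dspace" where
  "Lambda_ds S = (piOL S ` (fst S \<times> forms S),
     \<lambda>n U p. domain n U \<and> p ` U \<subseteq> piOL S ` (fst S \<times> forms S) \<and>
       (\<forall>u\<in>U. \<exists>V q. u \<in> V \<and> V \<subseteq> U \<and> domain n V \<and> snd (prod_ds S (forms_ds S)) n V q \<and>
          (\<forall>v\<in>V. p v = piOL S (q v))))"

definition rep :: "'b set \<Rightarrow> 'b" where
  "rep C = (SOME c. c \<in> C)"

definition Lambda :: "'a dspace \<Rightarrow> ('a, 'a \<times> 'a form set) vpb" where
  "Lambda S = \<lparr>base = S, total = Lambda_ds S, proj = fst,
     vadd = (\<lambda>a b. piOL S (fst a, fadd S (rep (snd a)) (rep (snd b)))),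
     vsmul = (\<lambda>r a. piOL S (fst a, fsmul S r (rep (snd a)))),
     vzero = (\<lambda>x. piOL S (x, fzero S))\<rparr>"

definition dform :: "'a dspace \<Rightarrow> ('a \<Rightarrow> real) \<Rightarrow> 'a form" where
  "dform S h = (\<lambda>n U p u. if snd S n U p \<and> u \<in> U then (\<lambda>i. if i < n then pdiff i (h \<circ> p) u else 0)
                          else undefined)"

definition dsec :: "'a dspace \<Rightarrow> ('a \<Rightarrow> real) \<Rightarrow> 'a \<Rightarrow> 'a \<times> 'a form set" where
  "dsec S h = (\<lambda>x\<in>fst S. piOL S (x, dform S h))"

definition fib_linear :: "('a, 'v, 'z) vpb_scheme \<Rightarrow> 'a \<Rightarrow> ('v \<Rightarrow> real) \<Rightarrow> bool" where
  "fib_linear E x f \<longleftrightarrow> (\<forall>u\<in>fibre E x. \<forall>v\<in>fibre E x. f (vadd E u v) = f u + f v) \<and>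
     (\<forall>a. \<forall>v\<in>fibre E x. f (vsmul E a v) = a * f v)"

definition dual_carrier :: "('a, 'v, 'z) vpb_scheme \<Rightarrow> ('a \<times> ('v \<Rightarrow> real)) set" where
  "dual_carrier E = {(x, f). x \<in> fst (base E) \<and> f \<in> extensional (fibre E x) \<and> fib_linear E x f \<and>
      dsmooth (subspace (total E) (fibre E x)) real_ds f}"

definition dual_ds :: "('a, 'v, 'z) vpb_scheme \<Rightarrow> ('a \<times> ('v \<Rightarrow> real)) dspace" where
  "dual_ds E = (dual_carrier E, \<lambda>n U p. domain n U \<and> p ` U \<subseteq> dual_carrier E \<and>
     (\<forall>m W q. snd (total E) m W q \<longrightarrow>
        (\<forall>k R G. domain k R \<and> smooth_map k R (n + m) (dom_prod n U m W) G \<and>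
            G ` R \<subseteq> {z \<in> dom_prod n U m W. fst (p (pfst n z)) = proj E (q (psnd n z))} \<longrightarrow>
          smooth_fun k R (\<lambda>r. snd (p (pfst n (G r))) (q (psnd n (G r)))))))"

definition dual :: "('a, 'v, 'z) vpb_scheme \<Rightarrow> ('a, 'a \<times> ('v \<Rightarrow> real)) vpb" where
  "dual E = \<lparr>base = base E, total = dual_ds E, proj = fst,
     vadd = (\<lambda>a b. (fst a, \<lambda>v\<in>fibre E (fst a). snd a v + snd b v)),
     vsmul = (\<lambda>r a. (fst a, \<lambda>v\<in>fibre E (fst a). r * snd a v)),
     vzero = (\<lambda>x. (x, \<lambda>v\<in>fibre E x. 0))\<rparr>"

definition bilin :: "('a, 'l, 'z) vpb_scheme \<Rightarrow> ('a, 'v, 'y) vpb_scheme \<Rightarrow> 'a \<Rightarrow> ('l \<Rightarrow> 'v \<Rightarrow> real) \<Rightarrow> bool" where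
  "bilin L V x \<beta> \<longleftrightarrow>
     (\<forall>l1\<in>fibre L x. \<forall>l2\<in>fibre L x. \<forall>v\<in>fibre V x. \<beta> (vadd L l1 l2) v = \<beta> l1 v + \<beta> l2 v) \<and>
     (\<forall>a. \<forall>l\<in>fibre L x. \<forall>v\<in>fibre V x. \<beta> (vsmul L a l) v = a * \<beta> l v) \<and>
     (\<forall>l\<in>fibre L x. \<forall>v1\<in>fibre V x. \<forall>v2\<in>fibre V x. \<beta> l (vadd V v1 v2) = \<beta> l v1 + \<beta> l v2) \<and>
     (\<forall>a. \<forall>l\<in>fibre L x. \<forall>v\<in>fibre V x. \<beta> l (vsmul V a v) = a * \<beta> l v)"

text \<open>The algebraic tensor product L_x (x) V_x: formal sums modulo identification by all bilinear forms.\<close>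
definition tclass :: "('a, 'l, 'z) vpb_scheme \<Rightarrow> ('a, 'v, 'y) vpb_scheme \<Rightarrow> 'a \<Rightarrow> ('l \<times> 'v) list \<Rightarrow> ('l \<times> 'v) list set" where
  "tclass L V x xs = {ys. set ys \<subseteq> fibre L x \<times> fibre V x \<and>
      (\<forall>\<beta>. bilin L V x \<beta> \<longrightarrow> (\<Sum>(l, v)\<leftarrow>ys. \<beta> l v) = (\<Sum>(l, v)\<leftarrow>xs. \<beta> l v))}"

definition tcarrier :: "('a, 'l, 'z) vpb_scheme \<Rightarrow> ('a, 'v, 'y) vpb_scheme \<Rightarrow> ('a \<times> ('l \<times> 'v) list set) set" where
  "tcarrier L V = {(x, tclass L V x xs) | x xs. x \<in> fst (base L) \<and> set xs \<subseteq> fibre L x \<times> fibre V x}"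

definition tensor_pre :: "('a, 'l, 'z) vpb_scheme \<Rightarrow> ('a, 'v, 'y) vpb_scheme \<Rightarrow> ('a \<times> ('l \<times> 'v) list set) plots
     \<Rightarrow> ('a, 'a \<times> ('l \<times> 'v) list set) vpb" where
  "tensor_pre L V P = \<lparr>base = base L, total = (tcarrier L V, P), proj = fst,
     vadd = (\<lambda>a b. (fst a, tclass L V (fst a) (rep (snd a) @ rep (snd b)))),
     vsmul = (\<lambda>r a. (fst a, tclass L V (fst a) (map (\<lambda>lv. (vsmul L r (fst lv), snd lv)) (rep (snd a))))),
     vzero = (\<lambda>x. (x, tclass L V x []))\<rparr>"

definition tmap :: "('a, 'l, 'z) vpb_scheme \<Rightarrow> ('a, 'v, 'y) vpb_scheme \<Rightarrow> 'l \<times> 'v \<Rightarrow> 'a \<times> ('l \<times> 'v) list set" where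
  "tmap L V lv = (proj L (fst lv), tclass L V (proj L (fst lv)) [lv])"

text \<open>Tensor product diffeology: the finest vector pseudo-bundle diffeology for which the
  tensor map from the fibred product L x_X V is smooth.\<close>
definition tensor :: "('a, 'l, 'z) vpb_scheme \<Rightarrow> ('a, 'v, 'y) vpb_scheme \<Rightarrow> ('a, 'a \<times> ('l \<times> 'v) list set) vpb" where
  "tensor L V = tensor_pre L V (\<lambda>n U p. \<forall>P. is_vpb (tensor_pre L V P) \<and>
       dsmooth (fibred_prod L V) (total (tensor_pre L V P)) (tmap L V) \<longrightarrow> P n U p)"

type_synonym ('a, 'v) lt = "'a \<times> (('a \<times> 'a form set) \<times> 'v) list set"

definition connection :: "('a, 'v, 'z) vpb_scheme \<Rightarrow> (('a \<Rightarrow> 'v) \<Rightarrow> ('a \<Rightarrow> ('a, 'v) lt)) \<Rightarrow> bool" where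
  "connection E nabla \<longleftrightarrow>
     (let X = base E; L = Lambda X; T = tensor L E; Secs = fst (sections_ds E) in
      dsmooth (sections_ds E) (sections_ds T) nabla \<and>
      (\<forall>s\<in>Secs. \<forall>s'\<in>Secs. nabla (\<lambda>x\<in>fst X. vadd E (s x) (s' x)) =
                              (\<lambda>x\<in>fst X. vadd T (nabla s x) (nabla s' x))) \<and>
      (\<forall>a. \<forall>s\<in>Secs. nabla (\<lambda>x\<in>fst X. vsmul E a (s x)) = (\<lambda>x\<in>fst X. vsmul T a (nabla s x))) \<and>
      (\<forall>h. dsmooth X real_ds h \<longrightarrow> (\<forall>s\<in>Secs.
          nabla (\<lambda>x\<in>fst X. vsmul E (h x) (s x)) =
          (\<lambda>x\<in>fst X. vadd T (tmap L E (dsec X h x, s x)) (vsmul T (h x) (nabla s x))))))"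

text \<open>(t(x) (x) Id) applied to an element of Lambda^1_x (x) V_x.\<close>
definition tevalId :: "('a, 'v, 'z) vpb_scheme \<Rightarrow> ('a \<Rightarrow> 'a \<times> ('a \<times> 'a form set \<Rightarrow> real)) \<Rightarrow> ('a, 'v) lt \<Rightarrow> 'v" where
  "tevalId E t c = foldr (\<lambda>lv acc. vadd E (vsmul E (snd (t (fst c)) (fst lv)) (snd lv)) acc)
                         (rep (snd c)) (vzero E (fst c))"

definition cov_deriv :: "('a, 'v, 'z) vpb_scheme \<Rightarrow> (('a \<Rightarrow> 'v) \<Rightarrow> ('a \<Rightarrow> ('a, 'v) lt))
     \<Rightarrow> ('a \<Rightarrow> 'a \<times> ('a \<times> 'a form set \<Rightarrow> real)) \<Rightarrow> ('a \<Rightarrow> 'v) \<Rightarrow> ('a \<Rightarrow> 'v)" where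
  "cov_deriv E nabla t s = (\<lambda>x\<in>fst (base E). tevalId E t (nabla s x))"

end

theory Submission
  imports Defs "HOL-Library.Function_Algebras"
begin


lemma vsD:
  assumes "vspace S add smul z"
  shows "z \<in> S" "\<And>u v. u\<in>S \<Longrightarrow> v\<in>S \<Longrightarrow> add u v \<in> S" "\<And>a v. v\<in>S \<Longrightarrow> smul a v \<in> S"
   "\<And>u v w. u\<in>S \<Longrightarrow> v\<in>S \<Longrightarrow> w\<in>S \<Longrightarrow> add (add u v) w = add u (add v w)"
   "\<And>u v. u\<in>S \<Longrightarrow> v\<in>S \<Longrightarrow> add u v = add v u"
   "\<And>v. v\<in>S \<Longrightarrow> add z v = v" "\<And>v. v\<in>S \<Longrightarrow> add v (smul (-1) v) = z"
   "\<And>a b v. v\<in>S \<Longrightarrow> smul a (smul b v) = smul (a * b) v" "\<And>v. v\<in>S \<Longrightarrow> smul 1 v = v"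
   "\<And>a u v. u\<in>S \<Longrightarrow> v\<in>S \<Longrightarrow> smul a (add u v) = add (smul a u) (smul a v)"
   "\<And>a b v. v\<in>S \<Longrightarrow> smul (a + b) v = add (smul a v) (smul b v)"
  apply (insert assms) apply (unfold vspace_def) apply (elim conjE, blast)+ apply (elim conjE) apply simp done

lemma vs_add_z2: assumes "vspace S add smul z" "v \<in> S" shows "add v z = v"
  using vsD(5)[OF assms(1) assms(2) vsD(1)[OF assms(1)]] vsD(6)[OF assms(1) assms(2)] by simp

lemma vs_smul0: assumes "vspace S add smul z" "v \<in> S" shows "smul 0 v = z"
proof -
  note V = vsD[OF assms(1)]
  let ?w = "smul 0 v"
  have w: "?w \<in> S" using V(3) assms(2) by blast
  have ww: "add ?w ?w = ?w" using V(11)[OF assms(2), of 0 0] by simp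
  have "z = add ?w (smul (-1) ?w)" using V(7) w by simp
  also have "\<dots> = add (add ?w ?w) (smul (-1) ?w)" using ww by simp
  also have "\<dots> = add ?w (add ?w (smul (-1) ?w))" using V(4)[OF w w V(3)[OF w]] by simp
  also have "\<dots> = ?w" using V(7)[OF w] vs_add_z2[OF assms(1) w] by simp
  finally show ?thesis by simp
qed

lemma vs_smulz: assumes "vspace S add smul z" shows "smul r z = z"
proof -
  note V = vsD[OF assms(1)]
  have "smul r z = smul r (smul 0 z)" using vs_smul0[OF assms V(1)] by simp
  also have "\<dots> = z" using V(8)[OF V(1), of r 0] vs_smul0[OF assms V(1)] by simp
  finally show ?thesis .
qed

lemma vs_eq: assumes "vspace S add smul z" "u \<in> S" "v \<in> S" "add u (smul (-1) v) = z"
  shows "u = v"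
proof -
  note V = vsD[OF assms(1)]
  have m: "smul (-1) v \<in> S" using V(3) assms by blast
  have "v = add z v" using V(6) assms by simp
  also have "\<dots> = add (add u (smul (-1) v)) v" using assms by simp
  also have "\<dots> = add u (add (smul (-1) v) v)" using V(4)[OF assms(2) m assms(3)] by simp
  also have "\<dots> = add u z" using V(5)[OF m assms(3)] V(7)[OF assms(3)] by simp
  also have "\<dots> = u" using vs_add_z2[OF assms(1,2)] by simp
  finally show ?thesis by simp
qed

lemma vs_swap: assumes "vspace S add smul z" "a \<in> S" "b \<in> S" "c \<in> S" "d \<in> S"
  shows "add (add a b) (add c d) = add (add a c) (add b d)"
proof -
  note V = vsD[OF assms(1)]
  have "add (add a b) (add c d) = add a (add b (add c d))" using V(4)[OF assms(2,3) V(2)[OF assms(4,5)]] by simp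
  also have "add b (add c d) = add (add b c) d" using V(4)[OF assms(3,4,5)] by simp
  also have "add b c = add c b" using V(5)[OF assms(3,4)] by simp
  also have "add (add c b) d = add c (add b d)" using V(4)[OF assms(4,3,5)] by simp
  also have "add a (add c (add b d)) = add (add a c) (add b d)" using V(4)[OF assms(2,4) V(2)[OF assms(3,5)]] by simp
  finally show ?thesis .
qed

lemma lcomb_in: assumes "vspace S add smul z" "set bs \<subseteq> S"
  shows "lcomb add smul z (zip cs bs) \<in> S"
  using assms(2)
proof (induction bs arbitrary: cs)
  case Nil then show ?case using vsD(1)[OF assms(1)] by simp
next
  case (Cons b bs) then show ?case using vsD(1,2,3)[OF assms(1)] by (cases cs) auto
qed

lemma lcomb_add: assumes "vspace S add smul z" "set bs \<subseteq> S"
  shows "length cs = length bs \<Longrightarrow> length ds = length bs \<Longrightarrow>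
    lcomb add smul z (zip (map2 (+) cs ds) bs) = add (lcomb add smul z (zip cs bs)) (lcomb add smul z (zip ds bs))"
  using assms(2)
proof (induction bs arbitrary: cs ds)
  case Nil then show ?case using vsD[OF assms(1)] by simp
next
  case (Cons b bs)
  note V = vsD[OF assms(1)]
  obtain c cs' d ds' where cs: "cs = c # cs'" "ds = d # ds'" using Cons.prems
    by (cases cs; cases ds) auto
  have b: "b \<in> S" and bs: "set bs \<subseteq> S" using Cons.prems by auto
  have IH: "lcomb add smul z (zip (map2 (+) cs' ds') bs) = add (lcomb add smul z (zip cs' bs)) (lcomb add smul z (zip ds' bs))"
    using Cons cs by auto
  have "lcomb add smul z (zip (map2 (+) cs ds) (b # bs)) = add (add (smul c b) (smul d b))
      (add (lcomb add smul z (zip cs' bs)) (lcomb add smul z (zip ds' bs)))"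
    using cs IH V(11)[OF b] by simp
  also have "\<dots> = add (add (smul c b) (lcomb add smul z (zip cs' bs))) (add (smul d b) (lcomb add smul z (zip ds' bs)))"
    by (rule vs_swap[OF assms(1)]) (use V(3)[OF b] lcomb_in[OF assms(1) bs] in auto)
  finally show ?case using cs by simp
qed

lemma lcomb_smul: assumes "vspace S add smul z" "set bs \<subseteq> S"
  shows "lcomb add smul z (zip (map ((*) r) cs) bs) = smul r (lcomb add smul z (zip cs bs))"
  using assms(2)
proof (induction bs arbitrary: cs)
  case Nil then show ?case using vs_smulz[OF assms(1)] by simp
next
  case (Cons b bs)
  note V = vsD[OF assms(1)]
  show ?case
  proof (cases cs)
    case Nil then show ?thesis using vs_smulz[OF assms(1)] by simp
  next
    case (Cons c cs')
    then show ?thesis using Cons.IH[of cs'] Cons.prems V(3,8,10) lcomb_in[OF assms(1)] by simp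
  qed
qed


definition fscale :: "real \<Rightarrow> (nat \<Rightarrow> real) \<Rightarrow> (nat \<Rightarrow> real)" where
  "fscale r c = (\<lambda>i. r * c i)"

lemma vs_fscale: "vector_space fscale"
  by unfold_locales (auto simp: fscale_def fun_eq_iff algebra_simps)

lemma vsp_fscale: "vector_space_pair fscale ((*) :: real \<Rightarrow> real \<Rightarrow> real)"
  unfolding vector_space_pair_def using vs_fscale
  by (auto simp: vector_space_def algebra_simps)

lemma map_plus_fun: "map (c + d) xs = map2 (+) (map c xs) (map (d::nat\<Rightarrow>real) xs)"
  by (induct xs) auto

lemma map_fscale: "map (fscale r c) xs = map ((*) r) (map c xs)"
  by (induct xs) (auto simp: fscale_def)

lemma map_nth_upt: "length cs = k \<Longrightarrow> map (\<lambda>i. cs ! i) [0..<k] = cs"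
  by (metis map_nth)

lemma sep:
  assumes V: "vspace S add smul z" and bs: "set bs \<subseteq> S"
    and span: "\<forall>v\<in>S. \<exists>cs. length cs = length bs \<and> v = lcomb add smul z (zip cs bs)"
    and w: "w \<in> S" "w \<noteq> z"
  shows "\<exists>\<phi>. (\<forall>u\<in>S. \<forall>v\<in>S. \<phi> (add u v) = \<phi> u + \<phi> v) \<and> (\<forall>a. \<forall>v\<in>S. \<phi> (smul a v) = a * \<phi> v) \<and> \<phi> w \<noteq> 0"
proof -
  interpret FV: vector_space fscale by (rule vs_fscale)
  interpret FP: vector_space_pair fscale "(*) :: real \<Rightarrow> real \<Rightarrow> real" by (rule vsp_fscale)
  note VS = vsD[OF V]
  define k where "k = length bs"
  define L where "L c = lcomb add smul z (zip (map c [0..<k]) bs)" for c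
  have LS: "L c \<in> S" for c unfolding L_def by (rule lcomb_in[OF V bs])
  have Ladd: "L (c + d) = add (L c) (L d)" for c d
  proof -
    have "map (c + d) [0..<k] = map2 (+) (map c [0..<k]) (map d [0..<k])"
      by (rule map_plus_fun)
    then show ?thesis unfolding L_def using lcomb_add[OF V bs, of "map c [0..<k]" "map d [0..<k]"]
      by (simp add: k_def)
  qed
  have Lsc: "L (fscale r c) = smul r (L c)" for r c
    unfolding L_def map_fscale by (rule lcomb_smul[OF V bs])
  have Lsurj: "\<exists>c. L c = v" if vS: "v \<in> S" for v
  proof -
    obtain cs where cs: "length cs = length bs" "v = lcomb add smul z (zip cs bs)" using bspec[OF span vS] by auto
    have "map (\<lambda>i. cs ! i) [0..<k] = cs" using cs(1) k_def map_nth_upt by blast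
    then have "L (\<lambda>i. cs ! i) = v" unfolding L_def using cs(2) by simp
    then show ?thesis by blast
  qed
  have L0: "L 0 = z"
  proof -
    have "L 0 = L (fscale 0 0)" by (simp add: fscale_def zero_fun_def)
    also have "\<dots> = z" using Lsc[of 0 0] vs_smul0[OF V LS[of 0]] by simp
    finally show ?thesis .
  qed
  define K where "K = {c. L c = z}"
  have subK: "FV.subspace K"
    unfolding FV.subspace_def K_def using L0 Ladd Lsc VS(6)[OF VS(1)] vs_smulz[OF V] by simp
  obtain c0 where c0: "L c0 = w" using Lsurj w(1) by blast
  have c0K: "c0 \<notin> K" using c0 w(2) K_def by auto
  obtain B where B: "B \<subseteq> K" "FV.independent B" "K \<subseteq> FV.span B"
    using FV.maximal_independent_subset[of K] by blast
  have spanB: "FV.span B \<subseteq> K" using FV.span_minimal[OF B(1) subK] .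
  have ind: "FV.independent (insert c0 B)"
    using FV.independent_insertI[OF _ B(2)] c0K spanB by blast
  obtain g where g: "Vector_Spaces.linear fscale (*) g" "\<forall>x\<in>insert c0 B. g x = (if x = c0 then 1 else 0)"
    using FP.linear_independent_extend[OF ind, of "\<lambda>x. if x = c0 then 1 else 0"] by blast
  interpret G: Vector_Spaces.linear fscale "(*) :: real \<Rightarrow> real \<Rightarrow> real" g by (rule g(1))
  have gK: "g c = 0" if "c \<in> K" for c
  proof -
    have "\<forall>x\<in>B. g x = 0" using g(2) B(1) c0K by auto
    then show ?thesis using FP.linear_eq_0_on_span[OF g(1)] B(3) that by blast
  qed
  have geq: "g c = g d" if "L c = L d" for c d
  proof -
    have e: "c + fscale (-1) d = c - d" by (simp add: fscale_def fun_eq_iff)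
    have "L (c + fscale (-1) d) = add (L c) (smul (-1) (L d))" by (simp only: Ladd Lsc)
    also have "\<dots> = z" using that VS(7)[OF LS[of c]] by simp
    finally have "L (c - d) = z" unfolding e .
    then have "g (c - d) = 0" using gK K_def by auto
    then show ?thesis using G.diff by simp
  qed
  define \<phi> where "\<phi> v = g (SOME c. L c = v)" for v
  have phi: "\<phi> v = g c" if "L c = v" for c v
  proof -
    have "L (SOME c. L c = v) = v" using someI[of "\<lambda>c. L c = v"] that by blast
    then show ?thesis unfolding \<phi>_def using geq[of "SOME c. L c = v" c] that by simp
  qed
  show ?thesis
  proof (intro exI conjI ballI allI)
    fix u v assume "u \<in> S" "v \<in> S"
    then obtain cu cv where "L cu = u" "L cv = v" using Lsurj by blast
    then show "\<phi> (add u v) = \<phi> u + \<phi> v" using phi[of "cu + cv" "add u v"] phi[of cu u] phi[of cv v] Ladd G.add by simp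
  next
    fix a v assume "v \<in> S"
    then obtain cv where "L cv = v" using Lsurj by blast
    then show "\<phi> (smul a v) = a * \<phi> v" using phi[of "fscale a cv" "smul a v"] phi[of cv v] Lsc G.scale by simp
  next
    show "\<phi> w \<noteq> 0" using phi[OF c0] g(2) by simp
  qed
qed


definition FF :: "('a, 'v, 'z) vpb_scheme \<Rightarrow> ('l \<Rightarrow> real) \<Rightarrow> 'a \<Rightarrow> ('l \<times> 'v) list \<Rightarrow> 'v" where
  "FF E f x ys = foldr (\<lambda>lv acc. vadd E (vsmul E (f (fst lv)) (snd lv)) acc) ys (vzero E x)"

lemma tevalId_FF: "tevalId E t c = FF E (snd (t (fst c))) (fst c) (rep (snd c))"
  unfolding tevalId_def FF_def by simp

lemma FF_Nil[simp]: "FF E f x [] = vzero E x" by (simp add: FF_def)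
lemma FF_Cons[simp]: "FF E f x (lv # ys) = vadd E (vsmul E (f (fst lv)) (snd lv)) (FF E f x ys)"
  by (simp add: FF_def)

lemma FF_in:
  assumes VS: "vspace (fibre E x) (vadd E) (vsmul E) (vzero E x)"
    and "\<forall>lv\<in>set ys. snd lv \<in> fibre E x"
  shows "FF E f x ys \<in> fibre E x"
  using assms(2)
proof (induction ys)
  case Nil then show ?case using vsD(1)[OF VS] by simp
next
  case (Cons lv ys) then show ?case using vsD(2,3)[OF VS] by simp
qed

lemma FF_append:
  assumes VS: "vspace (fibre E x) (vadd E) (vsmul E) (vzero E x)"
    and "\<forall>lv\<in>set ys. snd lv \<in> fibre E x" "\<forall>lv\<in>set zs. snd lv \<in> fibre E x"
  shows "FF E f x (ys @ zs) = vadd E (FF E f x ys) (FF E f x zs)"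
  using assms(2)
proof (induction ys)
  case Nil then show ?case using vsD(6)[OF VS FF_in[OF VS assms(3)]] by simp
next
  case (Cons lv ys)
  have a: "vsmul E (f (fst lv)) (snd lv) \<in> fibre E x" using vsD(3)[OF VS] Cons.prems by simp
  have "FF E f x ((lv # ys) @ zs) = vadd E (vsmul E (f (fst lv)) (snd lv)) (vadd E (FF E f x ys) (FF E f x zs))"
    using Cons by simp
  also have "\<dots> = vadd E (vadd E (vsmul E (f (fst lv)) (snd lv)) (FF E f x ys)) (FF E f x zs)"
    using vsD(4)[OF VS a FF_in[OF VS, of ys] FF_in[OF VS assms(3)]] Cons.prems by simp
  finally show ?case by simp
qed

lemma FF_lin:
  assumes VS: "vspace (fibre E x) (vadd E) (vsmul E) (vzero E x)"
    and ph1: "\<forall>u\<in>fibre E x. \<forall>v\<in>fibre E x. \<phi> (vadd E u v) = \<phi> u + \<phi> v"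
    and ph2: "\<forall>a. \<forall>v\<in>fibre E x. \<phi> (vsmul E a v) = a * \<phi> v"
    and "\<forall>lv\<in>set ys. snd lv \<in> fibre E x"
  shows "\<phi> (FF E f x ys) = (\<Sum>(l, v)\<leftarrow>ys. f l * \<phi> v)"
  using assms(4)
proof (induction ys)
  case Nil
  have "\<phi> (vzero E x) = \<phi> (vsmul E 0 (vzero E x))" using vs_smul0[OF VS vsD(1)[OF VS]] by simp
  also have "\<dots> = 0" using ph2 vsD(1)[OF VS] by simp
  finally show ?case by simp
next
  case (Cons lv ys)
  have a: "vsmul E (f (fst lv)) (snd lv) \<in> fibre E x" using vsD(3)[OF VS] Cons.prems by simp
  have "\<phi> (FF E f x (lv # ys)) = \<phi> (vsmul E (f (fst lv)) (snd lv)) + \<phi> (FF E f x ys)"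
    using ph1 a FF_in[OF VS, of ys] Cons.prems by simp
  also have "\<dots> = f (fst lv) * \<phi> (snd lv) + (\<Sum>(l, v)\<leftarrow>ys. f l * \<phi> v)"
    using ph2 Cons by simp
  finally show ?case by (cases lv) simp
qed

lemma FF_smulL:
  assumes VS: "vspace (fibre E x) (vadd E) (vsmul E) (vzero E x)"
    and fl: "fib_linear L x f"
    and "\<forall>lv\<in>set ys. fst lv \<in> fibre L x \<and> snd lv \<in> fibre E x"
  shows "FF E f x (map (\<lambda>lv. (vsmul L r (fst lv), snd lv)) ys) = vsmul E r (FF E f x ys)"
  using assms(3)
proof (induction ys)
  case Nil then show ?case using vs_smulz[OF VS] by simp
next
  case (Cons lv ys)
  have l: "fst lv \<in> fibre L x" and v: "snd lv \<in> fibre E x" using Cons.prems by auto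
  have fr: "f (vsmul L r (fst lv)) = r * f (fst lv)" using fl l unfolding fib_linear_def by blast
  have "FF E f x (map (\<lambda>lv. (vsmul L r (fst lv), snd lv)) (lv # ys)) =
     vadd E (vsmul E (r * f (fst lv)) (snd lv)) (vsmul E r (FF E f x ys))"
    using Cons fr by simp
  also have "\<dots> = vadd E (vsmul E r (vsmul E (f (fst lv)) (snd lv))) (vsmul E r (FF E f x ys))"
    using vsD(8)[OF VS v] by simp
  also have "\<dots> = vsmul E r (FF E f x (lv # ys))"
    using vsD(10)[OF VS vsD(3)[OF VS v] FF_in[OF VS, of ys]] Cons.prems by simp
  finally show ?case .
qed

lemma FF_wd:
  assumes VS: "vspace (fibre E x) (vadd E) (vsmul E) (vzero E x)"
    and fd: "fin_dim (fibre E x) (vadd E) (vsmul E) (vzero E x)"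
    and fl: "fib_linear L x f"
    and ys: "\<forall>lv\<in>set ys. snd lv \<in> fibre E x"
    and zs: "zs \<in> tclass L E x ys"
  shows "FF E f x zs = FF E f x ys"
proof (rule ccontr)
  assume ne: "FF E f x zs \<noteq> FF E f x ys"
  have zs': "\<forall>lv\<in>set zs. snd lv \<in> fibre E x" using zs unfolding tclass_def by auto
  have a: "FF E f x zs \<in> fibre E x" using FF_in[OF VS zs'] .
  have b: "FF E f x ys \<in> fibre E x" using FF_in[OF VS ys] .
  define w where "w = vadd E (FF E f x zs) (vsmul E (-1) (FF E f x ys))"
  have wS: "w \<in> fibre E x" using vsD(2,3)[OF VS] a b w_def by simp
  have wz: "w \<noteq> vzero E x" using vs_eq[OF VS a b] ne unfolding w_def by auto
  obtain bs where bs: "set bs \<subseteq> fibre E x"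
      "\<forall>v\<in>fibre E x. \<exists>cs. length cs = length bs \<and> v = lcomb (vadd E) (vsmul E) (vzero E x) (zip cs bs)"
    using fd unfolding fin_dim_def by blast
  obtain \<phi> where ph1: "\<forall>u\<in>fibre E x. \<forall>v\<in>fibre E x. \<phi> (vadd E u v) = \<phi> u + \<phi> v"
      and ph2: "\<forall>a. \<forall>v\<in>fibre E x. \<phi> (vsmul E a v) = a * \<phi> v" and ph3: "\<phi> w \<noteq> 0"
    using sep[OF VS bs wS wz] by blast
  have bil: "bilin L E x (\<lambda>l v. f l * \<phi> v)"
    using fl ph1 ph2 unfolding bilin_def fib_linear_def by (simp add: algebra_simps)
  have "(\<Sum>(l, v)\<leftarrow>zs. f l * \<phi> v) = (\<Sum>(l, v)\<leftarrow>ys. f l * \<phi> v)"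
    using zs bil unfolding tclass_def by blast
  then have eq: "\<phi> (FF E f x zs) = \<phi> (FF E f x ys)"
    using FF_lin[OF VS ph1 ph2 zs'] FF_lin[OF VS ph1 ph2 ys] by simp
  have "\<phi> w = \<phi> (FF E f x zs) + (-1) * \<phi> (FF E f x ys)"
    using ph1 ph2 a b vsD(3)[OF VS b] w_def by simp
  then show False using eq ph3 by simp
qed


lemma tp_simps:
  "base (tensor_pre L E P) = base L" "total (tensor_pre L E P) = (tcarrier L E, P)"
  "proj (tensor_pre L E P) = fst"
  "vadd (tensor_pre L E P) = (\<lambda>a b. (fst a, tclass L E (fst a) (rep (snd a) @ rep (snd b))))"
  "vsmul (tensor_pre L E P) = (\<lambda>r a. (fst a, tclass L E (fst a) (map (\<lambda>lv. (vsmul L r (fst lv), snd lv)) (rep (snd a)))))"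
  "vzero (tensor_pre L E P) = (\<lambda>x. (x, tclass L E x []))"
  by (simp_all add: tensor_pre_def)

lemma sum_map_mult: "(\<forall>y\<in>set ys. f y = r * g y) \<Longrightarrow> (\<Sum>y\<leftarrow>ys. f y) = r * (\<Sum>y\<leftarrow>ys. (g y :: real))"
  by (induct ys) (auto simp: algebra_simps)

lemma sum_split: "(\<Sum>(l, v)\<leftarrow>ys. \<beta> l v) = (\<Sum>lv\<leftarrow>ys. (\<beta> (fst lv) (snd lv) :: real))"
  by (induct ys) auto

lemma tclass_eqI:
  assumes "\<forall>\<beta>. bilin L E x \<beta> \<longrightarrow> (\<Sum>(l, v)\<leftarrow>ys. \<beta> l v) = (\<Sum>(l, v)\<leftarrow>zs. \<beta> l v)"
  shows "tclass L E x ys = tclass L E x zs"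
  using assms unfolding tclass_def by auto

lemma tclass_self: "set ys \<subseteq> fibre L x \<times> fibre E x \<Longrightarrow> ys \<in> tclass L E x ys"
  unfolding tclass_def by auto

lemma rep_tclass:
  assumes "set ys \<subseteq> fibre L x \<times> fibre E x"
  shows "set (rep (tclass L E x ys)) \<subseteq> fibre L x \<times> fibre E x"
    "\<And>\<beta>. bilin L E x \<beta> \<Longrightarrow> (\<Sum>(l, v)\<leftarrow>rep (tclass L E x ys). \<beta> l v) = (\<Sum>(l, v)\<leftarrow>ys. \<beta> l v)"
    "rep (tclass L E x ys) \<in> tclass L E x ys"
proof -
  have "rep (tclass L E x ys) \<in> tclass L E x ys"
    unfolding rep_def using tclass_self[OF assms] by (rule someI)
  then show "set (rep (tclass L E x ys)) \<subseteq> fibre L x \<times> fibre E x"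
    "\<And>\<beta>. bilin L E x \<beta> \<Longrightarrow> (\<Sum>(l, v)\<leftarrow>rep (tclass L E x ys). \<beta> l v) = (\<Sum>(l, v)\<leftarrow>ys. \<beta> l v)"
    "rep (tclass L E x ys) \<in> tclass L E x ys"
    unfolding tclass_def by auto
qed

lemma fibre_tp: "fibre (tensor_pre L E P) x = {c \<in> tcarrier L E. fst c = x}"
  by (simp add: fibre_def tp_simps)

lemma fibre_tpD:
  assumes "c \<in> fibre (tensor_pre L E P) x"
  shows "x \<in> fst (base L)" "set (rep (snd c)) \<subseteq> fibre L x \<times> fibre E x"
    "c = (x, tclass L E x (rep (snd c)))"
    "\<And>\<beta>. bilin L E x \<beta> \<Longrightarrow> (\<Sum>(l, v)\<leftarrow>rep (snd c). \<beta> l v) = (\<Sum>(l, v)\<leftarrow>xs. \<beta> l v) \<Longrightarrow> True"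
proof -
  obtain xs where c: "c = (x, tclass L E x xs)" "x \<in> fst (base L)" "set xs \<subseteq> fibre L x \<times> fibre E x"
    using assms unfolding fibre_tp tcarrier_def by auto
  show "x \<in> fst (base L)" by (fact c(2))
  show "set (rep (snd c)) \<subseteq> fibre L x \<times> fibre E x" using rep_tclass(1)[OF c(3)] c(1) by simp
  have "tclass L E x (rep (snd c)) = tclass L E x xs"
    by (rule tclass_eqI) (use rep_tclass(2)[OF c(3)] c(1) in simp)
  then show "c = (x, tclass L E x (rep (snd c)))" using c(1) by simp
qed simp

lemma fibre_tpI:
  "x \<in> fst (base L) \<Longrightarrow> set xs \<subseteq> fibre L x \<times> fibre E x \<Longrightarrow> (x, tclass L E x xs) \<in> fibre (tensor_pre L E P) x"
  unfolding fibre_tp tcarrier_def by auto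

lemma fibre_tp_ext:
  assumes "c \<in> fibre (tensor_pre L E P) x" "d \<in> fibre (tensor_pre L E P) x"
    "\<And>\<beta>. bilin L E x \<beta> \<Longrightarrow> (\<Sum>(l, v)\<leftarrow>rep (snd c). \<beta> l v) = (\<Sum>(l, v)\<leftarrow>rep (snd d). \<beta> l v)"
  shows "c = d"
proof -
  have "tclass L E x (rep (snd c)) = tclass L E x (rep (snd d))"
    by (rule tclass_eqI) (use assms(3) in blast)
  then show ?thesis using fibre_tpD(3)[OF assms(1)] fibre_tpD(3)[OF assms(2)] by metis
qed

lemma smul_tclass:
  assumes VSE: "vspace (fibre E x) (vadd E) (vsmul E) (vzero E x)"
    and ys: "set ys \<subseteq> fibre L x \<times> fibre E x"
  shows "tclass L E x (map (\<lambda>lv. (vsmul L r (fst lv), snd lv)) ys) = tclass L E x (map (\<lambda>lv. (fst lv, vsmul E r (snd lv))) ys)"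
    "set (map (\<lambda>lv. (fst lv, vsmul E r (snd lv))) ys) \<subseteq> fibre L x \<times> fibre E x"
    "\<And>\<beta>. bilin L E x \<beta> \<Longrightarrow> (\<Sum>(l, v)\<leftarrow>map (\<lambda>lv. (vsmul L r (fst lv), snd lv)) ys. \<beta> l v) = r * (\<Sum>(l, v)\<leftarrow>ys. \<beta> l v)"
    "\<And>\<beta>. bilin L E x \<beta> \<Longrightarrow> (\<Sum>(l, v)\<leftarrow>map (\<lambda>lv. (fst lv, vsmul E r (snd lv))) ys. \<beta> l v) = r * (\<Sum>(l, v)\<leftarrow>ys. \<beta> l v)"
proof -
  have A: "(\<Sum>(l, v)\<leftarrow>map (\<lambda>lv. (vsmul L r (fst lv), snd lv)) ys. \<beta> l v) = r * (\<Sum>(l, v)\<leftarrow>ys. \<beta> l v)"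
    if b: "bilin L E x \<beta>" for \<beta>
  proof -
    have "(\<Sum>(l, v)\<leftarrow>map (\<lambda>lv. (vsmul L r (fst lv), snd lv)) ys. \<beta> l v) = (\<Sum>lv\<leftarrow>ys. \<beta> (vsmul L r (fst lv)) (snd lv))"
      by (simp add: sum_split o_def)
    also have "\<dots> = r * (\<Sum>lv\<leftarrow>ys. \<beta> (fst lv) (snd lv))"
      by (rule sum_map_mult) (use b ys in \<open>auto simp: bilin_def\<close>)
    finally show ?thesis by (simp add: sum_split)
  qed
  have B: "(\<Sum>(l, v)\<leftarrow>map (\<lambda>lv. (fst lv, vsmul E r (snd lv))) ys. \<beta> l v) = r * (\<Sum>(l, v)\<leftarrow>ys. \<beta> l v)"
    if b: "bilin L E x \<beta>" for \<beta>
  proof -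
    have "(\<Sum>(l, v)\<leftarrow>map (\<lambda>lv. (fst lv, vsmul E r (snd lv))) ys. \<beta> l v) = (\<Sum>lv\<leftarrow>ys. \<beta> (fst lv) (vsmul E r (snd lv)))"
      by (simp add: sum_split o_def)
    also have "\<dots> = r * (\<Sum>lv\<leftarrow>ys. \<beta> (fst lv) (snd lv))"
      by (rule sum_map_mult) (use b ys in \<open>auto simp: bilin_def\<close>)
    finally show ?thesis by (simp add: sum_split)
  qed
  show "tclass L E x (map (\<lambda>lv. (vsmul L r (fst lv), snd lv)) ys) = tclass L E x (map (\<lambda>lv. (fst lv, vsmul E r (snd lv))) ys)"
    by (rule tclass_eqI) (use A B in simp)
  show "set (map (\<lambda>lv. (fst lv, vsmul E r (snd lv))) ys) \<subseteq> fibre L x \<times> fibre E x"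
    using ys vsD(3)[OF VSE] by auto
  show "\<And>\<beta>. bilin L E x \<beta> \<Longrightarrow> (\<Sum>(l, v)\<leftarrow>map (\<lambda>lv. (vsmul L r (fst lv), snd lv)) ys. \<beta> l v) = r * (\<Sum>(l, v)\<leftarrow>ys. \<beta> l v)"
    by (rule A)
  show "\<And>\<beta>. bilin L E x \<beta> \<Longrightarrow> (\<Sum>(l, v)\<leftarrow>map (\<lambda>lv. (fst lv, vsmul E r (snd lv))) ys. \<beta> l v) = r * (\<Sum>(l, v)\<leftarrow>ys. \<beta> l v)"
    by (rule B)
qed

definition Ssum :: "('l \<Rightarrow> 'v \<Rightarrow> real) \<Rightarrow> 'a \<times> ('l \<times> 'v) list set \<Rightarrow> real" where
  "Ssum \<beta> c = (\<Sum>(l, v)\<leftarrow>rep (snd c). \<beta> l v)"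

context
  fixes L :: "('a, 'l, 'y) vpb_scheme" and E :: "('a, 'v, 'z) vpb_scheme" and P :: "('a \<times> ('l \<times> 'v) list set) plots" and x
  assumes xX: "x \<in> fst (base L)"
    and VSE: "vspace (fibre E x) (vadd E) (vsmul E) (vzero E x)"
begin

abbreviation "TT \<equiv> tensor_pre L E P"

lemma tp_add: assumes "c \<in> fibre TT x" "d \<in> fibre TT x"
  shows "vadd TT c d \<in> fibre TT x" "\<And>\<beta>. bilin L E x \<beta> \<Longrightarrow> Ssum \<beta> (vadd TT c d) = Ssum \<beta> c + Ssum \<beta> d"
proof -
  have fc: "fst c = x" using assms(1) unfolding fibre_tp by auto
  have s: "set (rep (snd c) @ rep (snd d)) \<subseteq> fibre L x \<times> fibre E x"
    using fibre_tpD(2)[OF assms(1)] fibre_tpD(2)[OF assms(2)] by auto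
  show "vadd TT c d \<in> fibre TT x" using fibre_tpI[OF xX s] fc by (simp add: tp_simps)
  show "Ssum \<beta> (vadd TT c d) = Ssum \<beta> c + Ssum \<beta> d" if "bilin L E x \<beta>" for \<beta>
    using rep_tclass(2)[OF s that] fc unfolding Ssum_def by (simp add: tp_simps)
qed

lemma tp_smul: assumes "c \<in> fibre TT x"
  shows "vsmul TT r c \<in> fibre TT x" "\<And>\<beta>. bilin L E x \<beta> \<Longrightarrow> Ssum \<beta> (vsmul TT r c) = r * Ssum \<beta> c"
proof -
  have fc: "fst c = x" using assms(1) unfolding fibre_tp by auto
  have s: "set (rep (snd c)) \<subseteq> fibre L x \<times> fibre E x" using fibre_tpD(2)[OF assms(1)] .
  note st = smul_tclass[OF VSE s, where r=r]
  have eq: "vsmul TT r c = (x, tclass L E x (map (\<lambda>lv. (fst lv, vsmul E r (snd lv))) (rep (snd c))))"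
    using st(1) fc by (simp add: tp_simps)
  show "vsmul TT r c \<in> fibre TT x" unfolding eq by (rule fibre_tpI[OF xX st(2)])
  show "Ssum \<beta> (vsmul TT r c) = r * Ssum \<beta> c" if "bilin L E x \<beta>" for \<beta>
    using rep_tclass(2)[OF st(2) that] st(4)[OF that] unfolding Ssum_def eq by simp
qed

lemma tp_zero: shows "vzero TT x \<in> fibre TT x" "\<And>\<beta>. bilin L E x \<beta> \<Longrightarrow> Ssum \<beta> (vzero TT x) = 0"
proof -
  have s: "set [] \<subseteq> fibre L x \<times> fibre E x" by simp
  show "vzero TT x \<in> fibre TT x" using fibre_tpI[OF xX s] by (simp add: tp_simps)
  show "Ssum \<beta> (vzero TT x) = 0" if "bilin L E x \<beta>" for \<beta>
    using rep_tclass(2)[OF s that] unfolding Ssum_def by (simp add: tp_simps)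
qed

lemma tp_ext: "c \<in> fibre TT x \<Longrightarrow> d \<in> fibre TT x \<Longrightarrow> (\<And>\<beta>. bilin L E x \<beta> \<Longrightarrow> Ssum \<beta> c = Ssum \<beta> d) \<Longrightarrow> c = d"
  unfolding Ssum_def by (rule fibre_tp_ext)

end


context
  fixes L :: "('a, 'l, 'y) vpb_scheme" and E :: "('a, 'v, 'z) vpb_scheme" and P :: "('a \<times> ('l \<times> 'v) list set) plots" and x
  assumes xX: "x \<in> fst (base L)"
    and VSE: "vspace (fibre E x) (vadd E) (vsmul E) (vzero E x)"
begin

lemma tp_vspace: "vspace (fibre (TT L E P) x) (vadd (TT L E P)) (vsmul (TT L E P)) (vzero (TT L E P) x)"
proof -
  let ?F = "fibre (TT L E P) x"
  note A1 = tp_add(1)[OF xX VSE] and A2 = tp_add(2)[OF xX VSE]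
  note S1 = tp_smul(1)[OF xX VSE] and S2 = tp_smul(2)[OF xX VSE]
  note Z1 = tp_zero(1)[OF xX VSE] and Z2 = tp_zero(2)[OF xX VSE]
  note ext = tp_ext[OF xX VSE]
  show ?thesis unfolding vspace_def
  proof (intro conjI ballI allI)
    show "vzero (TT L E P) x \<in> ?F" by (rule Z1)
  next
    fix u v assume "u \<in> ?F" "v \<in> ?F"
    then show "vadd (TT L E P) u v \<in> ?F" by (rule A1)
  next
    fix a v assume "v \<in> ?F"
    then show "vsmul (TT L E P) a v \<in> ?F" by (rule S1)
  next
    fix u v w assume u: "u \<in> ?F" and v: "v \<in> ?F" and w: "w \<in> ?F"
    show "vadd (TT L E P) (vadd (TT L E P) u v) w = vadd (TT L E P) u (vadd (TT L E P) v w)"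
      by (rule ext[OF A1[OF A1[OF u v] w] A1[OF u A1[OF v w]]])
        (simp only: A2[OF A1[OF u v] w] A2[OF u A1[OF v w]] A2[OF u v] A2[OF v w] add.assoc)
  next
    fix u v assume u: "u \<in> ?F" and v: "v \<in> ?F"
    show "vadd (TT L E P) u v = vadd (TT L E P) v u"
      by (rule ext[OF A1[OF u v] A1[OF v u]]) (simp only: A2[OF u v] A2[OF v u] add.commute)
  next
    fix v assume v: "v \<in> ?F"
    show "vadd (TT L E P) (vzero (TT L E P) x) v = v"
      by (rule ext[OF A1[OF Z1 v] v]) (simp only: A2[OF Z1 v] Z2 add_0_left)
  next
    fix v assume v: "v \<in> ?F"
    show "vadd (TT L E P) v (vsmul (TT L E P) (-1) v) = vzero (TT L E P) x"
      by (rule ext[OF A1[OF v S1[OF v]] Z1]) (simp add: A2[OF v S1[OF v]] S2[OF v] Z2)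
  next
    fix a b v assume v: "v \<in> ?F"
    show "vsmul (TT L E P) a (vsmul (TT L E P) b v) = vsmul (TT L E P) (a * b) v"
      by (rule ext[OF S1[OF S1[OF v]] S1[OF v]]) (simp only: S2[OF S1[OF v]] S2[OF v] mult.assoc)
  next
    fix v assume v: "v \<in> ?F"
    show "vsmul (TT L E P) 1 v = v"
      by (rule ext[OF S1[OF v] v]) (simp only: S2[OF v] mult_1)
  next
    fix a u v assume u: "u \<in> ?F" and v: "v \<in> ?F"
    show "vsmul (TT L E P) a (vadd (TT L E P) u v) = vadd (TT L E P) (vsmul (TT L E P) a u) (vsmul (TT L E P) a v)"
      by (rule ext[OF S1[OF A1[OF u v]] A1[OF S1[OF u] S1[OF v]]])
        (simp only: S2[OF A1[OF u v]] A2[OF S1[OF u] S1[OF v]] A2[OF u v] S2[OF u] S2[OF v] distrib_left)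
  next
    fix a b v assume v: "v \<in> ?F"
    show "vsmul (TT L E P) (a + b) v = vadd (TT L E P) (vsmul (TT L E P) a v) (vsmul (TT L E P) b v)"
      by (rule ext[OF S1[OF v] A1[OF S1[OF v] S1[OF v]]])
        (simp only: S2[OF v] A2[OF S1[OF v] S1[OF v]] distrib_right)
  qed
qed

end


lemma deriv_lin: "deriv (\<lambda>h. a + h) 0 = (1::real)"
  by (rule DERIV_imp_deriv) (auto intro!: derivative_eq_intros)

lemma pdiff_coord: "pdiff i (\<lambda>w. w j) = (\<lambda>_. if i = j then 1 else 0)"
proof
  fix x :: pt
  show "pdiff i (\<lambda>w. w j) x = (if i = j then 1 else 0)"
  proof (cases "i = j")
    case True
    then have "(\<lambda>h. (x(i := x i + h)) j) = (\<lambda>h. x i + h)" by auto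
    then show ?thesis using True deriv_lin unfolding pdiff_def by simp
  next
    case False
    then have "(\<lambda>h. (x(i := x i + h)) j) = (\<lambda>h. x j)" by auto
    then show ?thesis using False unfolding pdiff_def by (simp add: deriv_const)
  qed
qed

lemma pdiff_const: "pdiff i (\<lambda>_. c) = (\<lambda>_. 0)"
  unfolding pdiff_def by (simp add: deriv_const)

lemma ipdiff_coord: "ipdiff ks (\<lambda>w. w j) = (\<lambda>w. w j) \<or> (\<exists>c. ipdiff ks (\<lambda>w. w j) = (\<lambda>_. c))"
proof (induction ks)
  case Nil then show ?case by simp
next
  case (Cons i ks)
  then show ?case
  proof
    assume "ipdiff ks (\<lambda>w. w j) = (\<lambda>w. w j)"
    then show ?thesis by (simp add: pdiff_coord) blast
  next
    assume "\<exists>c. ipdiff ks (\<lambda>w. w j) = (\<lambda>_. c)"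
    then show ?thesis by (auto simp: pdiff_const)
  qed
qed

lemma smooth_coord: "smooth_fun n U (\<lambda>w. w j)"
  unfolding smooth_fun_def
proof (intro allI impI conjI ballI)
  fix ks :: "nat list"
  show "continuous_on U (ipdiff ks (\<lambda>w. w j))"
    using ipdiff_coord[of ks j]
    by (metis continuous_on_const continuous_on_product_coordinates continuous_on_subset subset_UNIV)
  fix i x
  show "(\<lambda>h. ipdiff ks (\<lambda>w. w j) (x(i := x i + h))) differentiable at 0"
    using ipdiff_coord[of ks j]
  proof
    assume e: "ipdiff ks (\<lambda>w. w j) = (\<lambda>w. w j)"
    show ?thesis
    proof (cases "i = j")
      case True
      then have "(\<lambda>h. (x(i := x i + h)) j) = (\<lambda>h. x i + h)" by auto
      then show ?thesis using e by (simp add: differentiable_add)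
    next
      case False
      then have "(\<lambda>h. (x(i := x i + h)) j) = (\<lambda>h. x j)" by auto
      then show ?thesis using e by simp
    qed
  next
    assume "\<exists>c. ipdiff ks (\<lambda>w. w j) = (\<lambda>_. c)"
    then show ?thesis by auto
  qed
qed

definition diag :: "nat \<Rightarrow> pt \<Rightarrow> pt" where
  "diag n w = (\<lambda>i. if i < n then w i else if i < n + n then w (i - n) else 0)"

lemma diag_fst: "w \<in> euclid n \<Longrightarrow> pfst n (diag n w) = w"
  unfolding pfst_def diag_def euclid_def by auto

lemma diag_snd: "w \<in> euclid n \<Longrightarrow> psnd n (diag n w) = w"
  unfolding psnd_def diag_def euclid_def by auto

lemma diag_smooth:
  assumes "U \<subseteq> euclid n"
  shows "smooth_map n U (n + n) (dom_prod n U n U) (diag n)"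
  unfolding smooth_map_def
proof
  show "diag n ` U \<subseteq> dom_prod n U n U"
    using assms diag_fst diag_snd unfolding dom_prod_def by (auto simp: euclid_def diag_def)
  show "\<forall>i<n + n. smooth_fun n U (\<lambda>w. diag n w i)"
  proof (intro allI impI)
    fix i assume "i < n + n"
    then have "(\<lambda>w. diag n w i) = (\<lambda>w. w (if i < n then i else i - n))"
      unfolding diag_def by auto
    then show "smooth_fun n U (\<lambda>w. diag n w i)" using smooth_coord by simp
  qed
qed


lemma diffD:
  assumes "diffeological S"
  shows "snd S n U p \<Longrightarrow> domain n U"
    and "snd S n U p \<Longrightarrow> p ` U \<subseteq> fst S"
    and "snd S n U p \<Longrightarrow> (\<forall>u\<in>U. p u = q u) \<Longrightarrow> snd S n U q"
    and "domain n U \<Longrightarrow> x \<in> fst S \<Longrightarrow> snd S n U (\<lambda>_. x)"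
    and "domain n U \<Longrightarrow> p ` U \<subseteq> fst S \<Longrightarrow> (\<forall>u\<in>U. \<exists>V. u \<in> V \<and> V \<subseteq> U \<and> domain n V \<and> snd S n V p) \<Longrightarrow> snd S n U p"
    and "snd S n U p \<Longrightarrow> domain m W \<Longrightarrow> smooth_map m W n U F \<Longrightarrow> snd S m W (p \<circ> F)"
proof -
  note A = assms[unfolded diffeological_def]
  note A1 = A[THEN conjunct1] and A2 = A[THEN conjunct2, THEN conjunct1]
    and A3 = A[THEN conjunct2, THEN conjunct2, THEN conjunct1]
    and A4 = A[THEN conjunct2, THEN conjunct2, THEN conjunct2, THEN conjunct1]
    and A5 = A[THEN conjunct2, THEN conjunct2, THEN conjunct2, THEN conjunct2]
  show "snd S n U p \<Longrightarrow> domain n U" using A1 by blast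
  show "snd S n U p \<Longrightarrow> p ` U \<subseteq> fst S" using A1 by blast
  show "snd S n U p \<Longrightarrow> (\<forall>u\<in>U. p u = q u) \<Longrightarrow> snd S n U q" using A2 by blast
  show "domain n U \<Longrightarrow> x \<in> fst S \<Longrightarrow> snd S n U (\<lambda>_. x)" using A3 by blast
  show "domain n U \<Longrightarrow> p ` U \<subseteq> fst S \<Longrightarrow> (\<forall>u\<in>U. \<exists>V. u \<in> V \<and> V \<subseteq> U \<and> domain n V \<and> snd S n V p) \<Longrightarrow> snd S n U p"
    using A4 by blast
  show "snd S n U p \<Longrightarrow> domain m W \<Longrightarrow> smooth_map m W n U F \<Longrightarrow> snd S m W (p \<circ> F)"
    using A5 by blast
qed

lemma dsmoothD:
  "dsmooth S T f \<Longrightarrow> x \<in> fst S \<Longrightarrow> f x \<in> fst T"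
  "dsmooth S T f \<Longrightarrow> snd S n U p \<Longrightarrow> snd T n U (f \<circ> p)"
  unfolding dsmooth_def by auto

lemma Lambda_simps:
  "base (Lambda S) = S" "total (Lambda S) = Lambda_ds S" "proj (Lambda S) = fst"
  by (simp_all add: Lambda_def)

lemma dual_simps:
  "base (dual E) = base E" "total (dual E) = dual_ds E" "proj (dual E) = fst"
  by (simp_all add: dual_def)

lemma tensor_plots:
  "total (tensor L E) = (tcarrier L E, \<lambda>n U p. \<forall>P. is_vpb (tensor_pre L E P) \<and>
       dsmooth (fibred_prod L E) (total (tensor_pre L E P)) (tmap L E) \<longrightarrow> P n U p)"
  unfolding tensor_def by (simp add: tp_simps)

lemma tensor_tp: "\<exists>P. tensor L E = tensor_pre L E P"
  unfolding tensor_def by blast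

locale cov =
  fixes E :: "('a, 'v) vpb" and t :: "'a \<Rightarrow> 'a \<times> ('a \<times> 'a form set \<Rightarrow> real)"
  assumes fd: "fin_dim_vpb E" and tS: "t \<in> fst (sections_ds (dual (Lambda (base E))))"
begin

abbreviation "LL \<equiv> Lambda (base E)"
abbreviation "Phi \<equiv> tevalId E t"

lemma vpbE: "is_vpb E" using fd unfolding fin_dim_vpb_def by blast

lemma dX: "diffeological (base E)" using vpbE unfolding is_vpb_def by blast
lemma dE: "diffeological (total E)" using vpbE unfolding is_vpb_def by blast
lemma projS: "dsmooth (total E) (base E) (proj E)" using vpbE unfolding is_vpb_def by blast
lemma VS: "x \<in> fst (base E) \<Longrightarrow> vspace (fibre E x) (vadd E) (vsmul E) (vzero E x)"
  using vpbE unfolding is_vpb_def by blast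
lemma addS: "dsmooth (fibred_prod E E) (total E) (\<lambda>uv. vadd E (fst uv) (snd uv))"
  using vpbE unfolding is_vpb_def by blast
lemma smulS: "dsmooth (prod_ds real_ds (total E)) (total E) (\<lambda>av. vsmul E (fst av) (snd av))"
  using vpbE unfolding is_vpb_def by blast
lemma zeroS: "dsmooth (base E) (total E) (vzero E)"
  using vpbE unfolding is_vpb_def by blast
lemma FD: "x \<in> fst (base E) \<Longrightarrow> fin_dim (fibre E x) (vadd E) (vsmul E) (vzero E x)"
  using fd unfolding fin_dim_vpb_def by blast

lemma t_sm: "dsmooth (base E) (dual_ds LL) t"
  using tS unfolding sections_ds_def subspace_def fun_ds_def smooth_maps_def
  by (simp add: dual_simps Lambda_simps)

lemma t_fst: "x \<in> fst (base E) \<Longrightarrow> fst (t x) = x"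
  using tS unfolding sections_ds_def subspace_def fun_ds_def
  by (simp add: dual_simps Lambda_simps)

lemma t_lin: assumes "x \<in> fst (base E)" shows "fib_linear LL x (snd (t x))"
proof -
  have "t x \<in> dual_carrier LL" using dsmoothD(1)[OF t_sm assms] by (simp add: dual_ds_def)
  then have "fib_linear LL (fst (t x)) (snd (t x))" unfolding dual_carrier_def by (auto simp: case_prod_beta)
  then show ?thesis using t_fst[OF assms] by simp
qed

lemma xXL: "x \<in> fst (base E) \<Longrightarrow> x \<in> fst (base LL)" by (simp add: Lambda_simps)

lemma tcarD:
  assumes "c \<in> tcarrier LL E"
  shows "fst c \<in> fst (base E)" "c \<in> fibre (TT LL E P) (fst c)"
  using assms unfolding fibre_tp tcarrier_def by (auto simp: Lambda_simps)

lemma Phi_in: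
  assumes "x \<in> fst (base E)" "c \<in> fibre (TT LL E P) x"
  shows "Phi c \<in> fibre E x"
proof -
  have fc: "fst c = x" using assms(2) unfolding fibre_tp by auto
  show ?thesis unfolding tevalId_FF fc
    by (rule FF_in[OF VS[OF assms(1)]]) (use fibre_tpD(2)[OF assms(2)] in auto)
qed

lemma Phi_in':
  assumes "c \<in> tcarrier LL E"
  shows "Phi c \<in> fst (total E)" "proj E (Phi c) = fst c"
  using Phi_in[OF tcarD[OF assms]] unfolding fibre_def by auto

lemma Phi_add:
  assumes x: "x \<in> fst (base E)" and c: "c \<in> fibre (TT LL E P) x" and d: "d \<in> fibre (TT LL E P) x"
  shows "Phi (vadd (TT LL E P) c d) = vadd E (Phi c) (Phi d)"
proof -
  have fc: "fst c = x" using c unfolding fibre_tp by auto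
  have fdd: "fst d = x" using d unfolding fibre_tp by auto
  let ?ys = "rep (snd c) @ rep (snd d)"
  have s: "set ?ys \<subseteq> fibre LL x \<times> fibre E x" using fibre_tpD(2)[OF c] fibre_tpD(2)[OF d] by auto
  have s': "\<forall>lv\<in>set ?ys. snd lv \<in> fibre E x" using s by auto
  have v: "vadd (TT LL E P) c d = (x, tclass LL E x ?ys)" using fc by (simp add: tp_simps)
  have "Phi (vadd (TT LL E P) c d) = FF E (snd (t x)) x (rep (tclass LL E x ?ys))"
    unfolding v tevalId_FF by simp
  also have "\<dots> = FF E (snd (t x)) x ?ys"
    by (rule FF_wd[OF VS[OF x] FD[OF x] t_lin[OF x] s' rep_tclass(3)[OF s]])
  also have "\<dots> = vadd E (FF E (snd (t x)) x (rep (snd c))) (FF E (snd (t x)) x (rep (snd d)))"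
    by (rule FF_append[OF VS[OF x]]) (use s in auto)
  finally show ?thesis unfolding tevalId_FF fc fdd .
qed

lemma Phi_smul:
  assumes x: "x \<in> fst (base E)" and c: "c \<in> fibre (TT LL E P) x"
  shows "Phi (vsmul (TT LL E P) r c) = vsmul E r (Phi c)"
proof -
  have fc: "fst c = x" using c unfolding fibre_tp by auto
  have s: "set (rep (snd c)) \<subseteq> fibre LL x \<times> fibre E x" using fibre_tpD(2)[OF c] .
  let ?ys = "map (\<lambda>lv. (vsmul LL r (fst lv), snd lv)) (rep (snd c))"
  note st = smul_tclass[OF VS[OF x] s, where r=r]
  have v: "vsmul (TT LL E P) r c = (x, tclass LL E x ?ys)" using fc by (simp add: tp_simps)
  have rin: "rep (tclass LL E x ?ys) \<in> tclass LL E x ?ys"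
    using rep_tclass(3)[OF st(2)] st(1) by simp
  have s': "\<forall>lv\<in>set ?ys. snd lv \<in> fibre E x" using s by auto
  have "Phi (vsmul (TT LL E P) r c) = FF E (snd (t x)) x (rep (tclass LL E x ?ys))"
    unfolding v tevalId_FF by simp
  also have "\<dots> = FF E (snd (t x)) x ?ys"
    by (rule FF_wd[OF VS[OF x] FD[OF x] t_lin[OF x] s' rin])
  also have "\<dots> = vsmul E r (FF E (snd (t x)) x (rep (snd c)))"
    by (rule FF_smulL[OF VS[OF x] t_lin[OF x]]) (use s in auto)
  finally show ?thesis unfolding tevalId_FF fc .
qed

lemma Phi_zero:
  assumes x: "x \<in> fst (base E)"
  shows "Phi (vzero (TT LL E P) x) = vzero E x"
proof -
  have s: "set [] \<subseteq> fibre LL x \<times> fibre E x" by simp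
  have "Phi (vzero (TT LL E P) x) = FF E (snd (t x)) x (rep (tclass LL E x []))"
    unfolding tevalId_FF by (simp add: tp_simps)
  also have "\<dots> = FF E (snd (t x)) x []"
    by (rule FF_wd[OF VS[OF x] FD[OF x] t_lin[OF x] _ rep_tclass(3)[OF s]]) simp
  finally show ?thesis by simp
qed

lemma Phi_tmap:
  assumes x: "x \<in> fst (base E)" and l: "l \<in> fibre LL x" and v: "v \<in> fibre E x"
  shows "Phi (tmap LL E (l, v)) = vsmul E (snd (t x) l) v"
proof -
  have pl: "proj LL l = x" using l unfolding fibre_def by auto
  have s: "set [(l, v)] \<subseteq> fibre LL x \<times> fibre E x" using l v by simp
  have "Phi (tmap LL E (l, v)) = FF E (snd (t x)) x (rep (tclass LL E x [(l, v)]))"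
    using pl by (simp add: tevalId_FF tmap_def)
  also have "\<dots> = FF E (snd (t x)) x [(l, v)]"
    by (rule FF_wd[OF VS[OF x] FD[OF x] t_lin[OF x] _ rep_tclass(3)[OF s]]) (use v in simp)
  also have "\<dots> = vsmul E (snd (t x) l) v"
    using vs_add_z2[OF VS[OF x] vsD(3)[OF VS[OF x] v]] by simp
  finally show ?thesis .
qed

end


context cov begin

definition Pp :: "('a \<times> (('a \<times> 'a form set) \<times> 'v) list set) plots" where
  "Pp = (\<lambda>n U p. domain n U \<and> p ` U \<subseteq> tcarrier LL E \<and> snd (total E) n U (Phi \<circ> p))"

lemma Phi_img: "p ` U \<subseteq> tcarrier LL E \<Longrightarrow> (Phi \<circ> p) ` U \<subseteq> fst (total E)"
  by (auto intro!: Phi_in'(1))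

lemma diffI:
  assumes "\<And>n U p. snd S n U p \<Longrightarrow> domain n U"
    and "\<And>n U p. snd S n U p \<Longrightarrow> p ` U \<subseteq> fst S"
    and "\<And>n U p q. snd S n U p \<Longrightarrow> \<forall>u\<in>U. p u = q u \<Longrightarrow> snd S n U q"
    and "\<And>n U x. domain n U \<Longrightarrow> x \<in> fst S \<Longrightarrow> snd S n U (\<lambda>_. x)"
    and "\<And>n U p. domain n U \<Longrightarrow> p ` U \<subseteq> fst S \<Longrightarrow> \<forall>u\<in>U. \<exists>V. u \<in> V \<and> V \<subseteq> U \<and> domain n V \<and> snd S n V p \<Longrightarrow> snd S n U p"
    and "\<And>n U p m W F. snd S n U p \<Longrightarrow> domain m W \<Longrightarrow> smooth_map m W n U F \<Longrightarrow> snd S m W (p \<circ> F)"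
  shows "diffeological S"
  unfolding diffeological_def
  apply (intro conjI allI impI)
  using assms(1) apply blast
  using assms(2) apply blast
  using assms(3) apply blast
  using assms(4) apply blast
  using assms(5) apply blast
  using assms(6) apply blast
  done

lemma Pp_diff: "diffeological (tcarrier LL E, Pp)"
proof (rule diffI, unfold fst_conv snd_conv)
  fix n U p assume "Pp n U p"
  then show "domain n U" unfolding Pp_def by blast
next
  fix n U p assume "Pp n U p"
  then show "p ` U \<subseteq> tcarrier LL E" unfolding Pp_def by blast
next
  fix n U p q assume a: "Pp n U p" "\<forall>u\<in>U. p u = q u"
  then have "snd (total E) n U (Phi \<circ> q)"
    using diffD(3)[OF dE, of n U "Phi \<circ> p" "Phi \<circ> q"] unfolding Pp_def by auto
  then show "Pp n U q" using a unfolding Pp_def by auto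
next
  fix n U c assume a: "domain n U" "c \<in> tcarrier LL E"
  have "snd (total E) n U (\<lambda>_. Phi c)" using diffD(4)[OF dE] Phi_in'(1) a by blast
  then show "Pp n U (\<lambda>_. c)" using a unfolding Pp_def by (auto simp: o_def)
next
  fix n U p
  assume a: "domain n U" "p ` U \<subseteq> tcarrier LL E" "\<forall>u\<in>U. \<exists>V. u \<in> V \<and> V \<subseteq> U \<and> domain n V \<and> Pp n V p"
  have "\<forall>u\<in>U. \<exists>V. u \<in> V \<and> V \<subseteq> U \<and> domain n V \<and> snd (total E) n V (Phi \<circ> p)"
    using a(3) unfolding Pp_def by blast
  then have "snd (total E) n U (Phi \<circ> p)"
    by (rule diffD(5)[OF dE a(1) Phi_img[OF a(2)]])
  then show "Pp n U p" using a unfolding Pp_def by auto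
next
  fix n U p m W F assume a: "Pp n U p" "domain m W" "smooth_map m W n U F"
  have "snd (total E) n U (Phi \<circ> p)" using a(1) unfolding Pp_def by simp
  then have "snd (total E) m W ((Phi \<circ> p) \<circ> F)"
    using diffD(6)[OF dE _ a(2) a(3)] by blast
  moreover have "(p \<circ> F) ` W \<subseteq> tcarrier LL E" using a unfolding Pp_def smooth_map_def by auto
  ultimately show "Pp m W (p \<circ> F)" using a unfolding Pp_def by (simp add: o_assoc)
qed

end


lemma fp_fst: "fst (fibred_prod E F) = (fst (total E) \<times> fst (total F)) \<inter> {(v, w). proj E v = proj F w}"
  unfolding fibred_prod_def subspace_def prod_ds_def by simp

lemma fp_snd: "snd (fibred_prod E F) n U r \<longleftrightarrow>
   snd (total E) n U (fst \<circ> r) \<and> snd (total F) n U (snd \<circ> r) \<and> r ` U \<subseteq> {(v, w). proj E v = proj F w}"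
  unfolding fibred_prod_def subspace_def prod_ds_def by simp

lemma pd_fst: "fst (prod_ds S T) = fst S \<times> fst T" unfolding prod_ds_def by simp
lemma pd_snd: "snd (prod_ds S T) n U r \<longleftrightarrow> snd S n U (fst \<circ> r) \<and> snd T n U (snd \<circ> r)"
  unfolding prod_ds_def by simp

context cov begin

lemma plot_cong: "snd (total E) n U f \<Longrightarrow> (\<And>u. u \<in> U \<Longrightarrow> f u = g u) \<Longrightarrow> snd (total E) n U g"
  using diffD(3)[OF dE] by blast

lemma fib_tcar: "c \<in> fibre (TT LL E P) x \<Longrightarrow> c \<in> tcarrier LL E"
  unfolding fibre_tp by auto

lemma PpD: assumes "Pp n U p" shows "domain n U" "p ` U \<subseteq> tcarrier LL E" "snd (total E) n U (Phi \<circ> p)"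
  using assms unfolding Pp_def by auto

lemma h_proj: "dsmooth (tcarrier LL E, Pp) (base E) fst"
  unfolding dsmooth_def fst_conv snd_conv
proof (intro conjI allI impI)
  show "fst ` tcarrier LL E \<subseteq> fst (base E)" using tcarD(1) by blast
next
  fix n U p assume a: "Pp n U p"
  have "snd (base E) n U (proj E \<circ> (Phi \<circ> p))" using dsmoothD(2)[OF projS PpD(3)[OF a]] .
  moreover have "\<forall>u\<in>U. (proj E \<circ> (Phi \<circ> p)) u = (fst \<circ> p) u"
  proof
    fix u assume "u \<in> U"
    then have "p u \<in> tcarrier LL E" using PpD(2)[OF a] by auto
    then show "(proj E \<circ> (Phi \<circ> p)) u = (fst \<circ> p) u" using Phi_in'(2) by simp
  qed
  ultimately show "snd (base E) n U (fst \<circ> p)" by (rule diffD(3)[OF dX])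
qed

lemma h_surj: "fst ` tcarrier LL E = fst (base E)"
proof
  show "fst ` tcarrier LL E \<subseteq> fst (base E)" using tcarD(1) by blast
  show "fst (base E) \<subseteq> fst ` tcarrier LL E"
  proof
    fix x assume "x \<in> fst (base E)"
    then have "(x, tclass LL E x []) \<in> tcarrier LL E" unfolding tcarrier_def by (auto simp: Lambda_simps)
    then show "x \<in> fst ` tcarrier LL E" by force
  qed
qed

lemma h_add: "dsmooth (fibred_prod (TT LL E Pp) (TT LL E Pp)) (tcarrier LL E, Pp) (\<lambda>uv. vadd (TT LL E Pp) (fst uv) (snd uv))"
proof -
  have cl: "vadd (TT LL E Pp) a b \<in> tcarrier LL E" if "a \<in> tcarrier LL E" "b \<in> tcarrier LL E" "fst a = fst b" for a b
  proof -
    have x: "fst a \<in> fst (base E)" using tcarD(1)[OF that(1)] .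
    have "a \<in> fibre (TT LL E Pp) (fst a)" "b \<in> fibre (TT LL E Pp) (fst a)"
      using tcarD(2)[OF that(1)] tcarD(2)[OF that(2)] that(3) by auto
    then show ?thesis using fib_tcar tp_add(1)[OF xXL[OF x] VS[OF x]] by blast
  qed
  show ?thesis
    unfolding dsmooth_def fp_fst fp_snd
  proof (intro conjI allI impI)
    show "(\<lambda>uv. vadd (TT LL E Pp) (fst uv) (snd uv)) ` ((fst (total (TT LL E Pp)) \<times> fst (total (TT LL E Pp))) \<inter>
        {(v, w). proj (TT LL E Pp) v = proj (TT LL E Pp) w}) \<subseteq> fst (tcarrier LL E, Pp)"
      using cl by (auto simp: tp_simps)
  next
    fix n U r
    assume a: "snd (total (TT LL E Pp)) n U (fst \<circ> r) \<and> snd (total (TT LL E Pp)) n U (snd \<circ> r) \<and>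
      r ` U \<subseteq> {(v, w). proj (TT LL E Pp) v = proj (TT LL E Pp) w}"
    then have p1: "Pp n U (fst \<circ> r)" and p2: "Pp n U (snd \<circ> r)" and p3: "\<forall>u\<in>U. fst (fst (r u)) = fst (snd (r u))"
      by (auto simp: tp_simps)
    have inc: "fst (r u) \<in> tcarrier LL E" "snd (r u) \<in> tcarrier LL E" if "u \<in> U" for u
      using PpD(2)[OF p1] PpD(2)[OF p2] that by auto
    define r' where "r' = (\<lambda>u. (Phi (fst (r u)), Phi (snd (r u))))"
    have "snd (fibred_prod E E) n U r'"
      unfolding fp_snd
    proof (intro conjI)
      show "snd (total E) n U (fst \<circ> r')" using PpD(3)[OF p1] unfolding r'_def by (simp add: o_def)
      show "snd (total E) n U (snd \<circ> r')" using PpD(3)[OF p2] unfolding r'_def by (simp add: o_def)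
      show "r' ` U \<subseteq> {(v, w). proj E v = proj E w}"
      proof
        fix y assume "y \<in> r' ` U"
        then obtain u where u: "u \<in> U" "y = r' u" by blast
        have "proj E (Phi (fst (r u))) = fst (fst (r u))" by (rule Phi_in'(2)[OF inc(1)[OF u(1)]])
        moreover have "proj E (Phi (snd (r u))) = fst (snd (r u))" by (rule Phi_in'(2)[OF inc(2)[OF u(1)]])
        ultimately show "y \<in> {(v, w). proj E v = proj E w}" using u p3 unfolding r'_def by simp
      qed
    qed
    then have "snd (total E) n U ((\<lambda>uv. vadd E (fst uv) (snd uv)) \<circ> r')" by (rule dsmoothD(2)[OF addS])
    then have "snd (total E) n U (Phi \<circ> ((\<lambda>uv. vadd (TT LL E Pp) (fst uv) (snd uv)) \<circ> r))"
    proof (rule plot_cong)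
      fix u assume u: "u \<in> U"
      let ?x = "fst (fst (r u))"
      have x: "?x \<in> fst (base E)" using tcarD(1)[OF inc(1)[OF u]] .
      have "fst (r u) \<in> fibre (TT LL E Pp) ?x" "snd (r u) \<in> fibre (TT LL E Pp) ?x"
        using tcarD(2)[OF inc(1)[OF u]] tcarD(2)[OF inc(2)[OF u]] p3 u by auto
      then show "((\<lambda>uv. vadd E (fst uv) (snd uv)) \<circ> r') u = (Phi \<circ> ((\<lambda>uv. vadd (TT LL E Pp) (fst uv) (snd uv)) \<circ> r)) u"
        unfolding r'_def using Phi_add[OF x] by simp
    qed
    moreover have "((\<lambda>uv. vadd (TT LL E Pp) (fst uv) (snd uv)) \<circ> r) ` U \<subseteq> tcarrier LL E"
    proof (rule image_subsetI)
      fix u assume u: "u \<in> U"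
      show "((\<lambda>uv. vadd (TT LL E Pp) (fst uv) (snd uv)) \<circ> r) u \<in> tcarrier LL E"
        using cl[OF inc(1)[OF u] inc(2)[OF u]] p3 u by simp
    qed
    ultimately show "snd (tcarrier LL E, Pp) n U ((\<lambda>uv. vadd (TT LL E Pp) (fst uv) (snd uv)) \<circ> r)"
      using PpD(1)[OF p1] unfolding Pp_def by simp
  qed
qed

end


context cov begin

lemma real_ds_snd: "snd real_ds n U f \<longleftrightarrow> domain n U \<and> smooth_fun n U f"
  unfolding real_ds_def by simp

lemma h_smul: "dsmooth (prod_ds real_ds (tcarrier LL E, Pp)) (tcarrier LL E, Pp) (\<lambda>av. vsmul (TT LL E Pp) (fst av) (snd av))"
proof -
  have cl: "vsmul (TT LL E Pp) a c \<in> tcarrier LL E" if "c \<in> tcarrier LL E" for a c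
  proof -
    have x: "fst c \<in> fst (base E)" using tcarD(1)[OF that] .
    show ?thesis using fib_tcar tp_smul(1)[OF xXL[OF x] VS[OF x] tcarD(2)[OF that]] by blast
  qed
  show ?thesis
    unfolding dsmooth_def pd_fst pd_snd fst_conv snd_conv
  proof (intro conjI allI impI)
    show "(\<lambda>av. vsmul (TT LL E Pp) (fst av) (snd av)) ` (fst real_ds \<times> tcarrier LL E) \<subseteq> tcarrier LL E"
    proof (rule image_subsetI)
      fix y assume "y \<in> fst real_ds \<times> tcarrier LL E"
      then show "vsmul (TT LL E Pp) (fst y) (snd y) \<in> tcarrier LL E" using cl by (cases y) auto
    qed
  next
    fix n U r
    assume a: "snd real_ds n U (fst \<circ> r) \<and> Pp n U (snd \<circ> r)"
    then have p1: "snd real_ds n U (fst \<circ> r)" and p2: "Pp n U (snd \<circ> r)" by auto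
    have inc: "snd (r u) \<in> tcarrier LL E" if "u \<in> U" for u
      using PpD(2)[OF p2] that by auto
    define r' where "r' = (\<lambda>u. (fst (r u), Phi (snd (r u))))"
    have "snd (prod_ds real_ds (total E)) n U r'"
      unfolding pd_snd
    proof (intro conjI)
      show "snd real_ds n U (fst \<circ> r')" using p1 unfolding r'_def by (simp add: o_def)
      show "snd (total E) n U (snd \<circ> r')" using PpD(3)[OF p2] unfolding r'_def by (simp add: o_def)
    qed
    then have "snd (total E) n U ((\<lambda>av. vsmul E (fst av) (snd av)) \<circ> r')" by (rule dsmoothD(2)[OF smulS])
    then have "snd (total E) n U (Phi \<circ> ((\<lambda>av. vsmul (TT LL E Pp) (fst av) (snd av)) \<circ> r))"
    proof (rule plot_cong)
      fix u assume u: "u \<in> U"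
      have x: "fst (snd (r u)) \<in> fst (base E)" using tcarD(1)[OF inc[OF u]] .
      show "((\<lambda>av. vsmul E (fst av) (snd av)) \<circ> r') u = (Phi \<circ> ((\<lambda>av. vsmul (TT LL E Pp) (fst av) (snd av)) \<circ> r)) u"
        unfolding r'_def using Phi_smul[OF x tcarD(2)[OF inc[OF u]]] by simp
    qed
    moreover have "((\<lambda>av. vsmul (TT LL E Pp) (fst av) (snd av)) \<circ> r) ` U \<subseteq> tcarrier LL E"
    proof (rule image_subsetI)
      fix u assume u: "u \<in> U"
      show "((\<lambda>av. vsmul (TT LL E Pp) (fst av) (snd av)) \<circ> r) u \<in> tcarrier LL E"
        using cl[OF inc[OF u]] by simp
    qed
    ultimately show "Pp n U ((\<lambda>av. vsmul (TT LL E Pp) (fst av) (snd av)) \<circ> r)"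
      using PpD(1)[OF p2] unfolding Pp_def by simp
  qed
qed

lemma h_zero: "dsmooth (base E) (tcarrier LL E, Pp) (vzero (TT LL E Pp))"
proof -
  have cl: "vzero (TT LL E Pp) x \<in> tcarrier LL E" if x: "x \<in> fst (base E)" for x
    using fib_tcar tp_zero(1)[OF xXL[OF x] VS[OF x]] by blast
  show ?thesis
    unfolding dsmooth_def fst_conv snd_conv
  proof (intro conjI allI impI)
    show "vzero (TT LL E Pp) ` fst (base E) \<subseteq> tcarrier LL E" using cl by blast
  next
    fix n U p assume a: "snd (base E) n U p"
    have inc: "p u \<in> fst (base E)" if "u \<in> U" for u using diffD(2)[OF dX a] that by auto
    have "snd (total E) n U (vzero E \<circ> p)" by (rule dsmoothD(2)[OF zeroS a])
    then have "snd (total E) n U (Phi \<circ> (vzero (TT LL E Pp) \<circ> p))"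
    proof (rule plot_cong)
      fix u assume u: "u \<in> U"
      show "(vzero E \<circ> p) u = (Phi \<circ> (vzero (TT LL E Pp) \<circ> p)) u"
        using Phi_zero[OF inc[OF u]] by simp
    qed
    moreover have "(vzero (TT LL E Pp) \<circ> p) ` U \<subseteq> tcarrier LL E" using cl inc by auto
    ultimately show "Pp n U (vzero (TT LL E Pp) \<circ> p)"
      using diffD(1)[OF dX a] unfolding Pp_def by simp
  qed
qed

lemma Lambda_plot_img: "snd (Lambda_ds S) n U p \<Longrightarrow> p ` U \<subseteq> fst (Lambda_ds S)"
  unfolding Lambda_ds_def by simp

lemma dual_plotD:
  assumes "snd (dual_ds L) n U p" "snd (total L) m W q" "domain k R"
    "smooth_map k R (n + m) (dom_prod n U m W) G"
    "G ` R \<subseteq> {z \<in> dom_prod n U m W. fst (p (pfst n z)) = proj L (q (psnd n z))}"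
  shows "smooth_fun k R (\<lambda>r. snd (p (pfst n (G r))) (q (psnd n (G r))))"
proof -
  have H: "\<forall>m W q. snd (total L) m W q \<longrightarrow>
        (\<forall>k R G. domain k R \<and> smooth_map k R (n + m) (dom_prod n U m W) G \<and>
            G ` R \<subseteq> {z \<in> dom_prod n U m W. fst (p (pfst n z)) = proj L (q (psnd n z))} \<longrightarrow>
          smooth_fun k R (\<lambda>r. snd (p (pfst n (G r))) (q (psnd n (G r)))))"
    using assms(1) unfolding dual_ds_def by simp
  show ?thesis using H assms(2-5) by blast
qed

lemma tmap_car:
  assumes "l \<in> fst (total LL)" "v \<in> fst (total E)" "proj LL l = proj E v"
  shows "tmap LL E (l, v) \<in> tcarrier LL E" "l \<in> fibre LL (proj E v)" "v \<in> fibre E (proj E v)"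
    "proj E v \<in> fst (base E)"
proof -
  show x: "proj E v \<in> fst (base E)" using dsmoothD(1)[OF projS assms(2)] .
  show l: "l \<in> fibre LL (proj E v)" using assms unfolding fibre_def by simp
  show v: "v \<in> fibre E (proj E v)" using assms unfolding fibre_def by simp
  show "tmap LL E (l, v) \<in> tcarrier LL E"
    unfolding tmap_def tcarrier_def using x l v assms(3) by (auto simp: Lambda_simps)
qed

lemma h_tmap: "dsmooth (fibred_prod LL E) (tcarrier LL E, Pp) (tmap LL E)"
  unfolding dsmooth_def fp_fst fp_snd fst_conv snd_conv
proof (intro conjI allI impI)
  show "tmap LL E ` ((fst (total LL) \<times> fst (total E)) \<inter> {(v, w). proj LL v = proj E w}) \<subseteq> tcarrier LL E"
  proof (rule image_subsetI)
    fix y assume "y \<in> (fst (total LL) \<times> fst (total E)) \<inter> {(v, w). proj LL v = proj E w}"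
    then have "fst y \<in> fst (total LL)" "snd y \<in> fst (total E)" "proj LL (fst y) = proj E (snd y)" by auto
    from tmap_car(1)[OF this] show "tmap LL E y \<in> tcarrier LL E" by simp
  qed
next
  fix n U r
  assume a: "snd (total LL) n U (fst \<circ> r) \<and> snd (total E) n U (snd \<circ> r) \<and> r ` U \<subseteq> {(v, w). proj LL v = proj E w}"
  then have pl: "snd (total LL) n U (fst \<circ> r)" and pv: "snd (total E) n U (snd \<circ> r)"
    and pr: "\<forall>u\<in>U. proj LL (fst (r u)) = proj E (snd (r u))" by auto
  have dom: "domain n U" using diffD(1)[OF dE pv] .
  have Ue: "U \<subseteq> euclid n" using dom unfolding domain_def by blast
  have lin: "fst (r u) \<in> fst (total LL)" if "u \<in> U" for u
    using Lambda_plot_img[OF pl[unfolded Lambda_simps]] that unfolding Lambda_simps by auto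
  have vin: "snd (r u) \<in> fst (total E)" if "u \<in> U" for u
    using diffD(2)[OF dE pv] that by auto
  have px: "snd (base E) n U (proj E \<circ> (snd \<circ> r))" by (rule dsmoothD(2)[OF projS pv])
  have tp: "snd (dual_ds LL) n U (t \<circ> (proj E \<circ> (snd \<circ> r)))" by (rule dsmoothD(2)[OF t_sm px])
  have ds: "smooth_map n U (n + n) (dom_prod n U n U) (diag n)" by (rule diag_smooth[OF Ue])
  have G: "diag n ` U \<subseteq> {z \<in> dom_prod n U n U. fst ((t \<circ> (proj E \<circ> (snd \<circ> r))) (pfst n z)) = proj LL ((fst \<circ> r) (psnd n z))}"
  proof (rule image_subsetI)
    fix u assume u: "u \<in> U"
    have ue: "u \<in> euclid n" using u Ue by blast
    have dp: "diag n u \<in> dom_prod n U n U" using ds u unfolding smooth_map_def by blast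
    have x: "proj E (snd (r u)) \<in> fst (base E)" using dsmoothD(1)[OF projS vin[OF u]] .
    show "diag n u \<in> {z \<in> dom_prod n U n U. fst ((t \<circ> (proj E \<circ> (snd \<circ> r))) (pfst n z)) = proj LL ((fst \<circ> r) (psnd n z))}"
      using dp diag_fst[OF ue] diag_snd[OF ue] t_fst[OF x] pr u by simp
  qed
  define a' where "a' = (\<lambda>w. snd ((t \<circ> (proj E \<circ> (snd \<circ> r))) (pfst n (diag n w))) ((fst \<circ> r) (psnd n (diag n w))))"
  have sa: "smooth_fun n U a'"
    unfolding a'_def by (rule dual_plotD[OF tp pl dom ds G])
  define r' where "r' = (\<lambda>u. (a' u, snd (r u)))"
  have "snd (prod_ds real_ds (total E)) n U r'"
    unfolding pd_snd
  proof (intro conjI)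
    show "snd real_ds n U (fst \<circ> r')" using sa dom unfolding r'_def real_ds_snd by (simp add: o_def)
    show "snd (total E) n U (snd \<circ> r')" using pv unfolding r'_def by (simp add: o_def)
  qed
  then have "snd (total E) n U ((\<lambda>av. vsmul E (fst av) (snd av)) \<circ> r')" by (rule dsmoothD(2)[OF smulS])
  then have "snd (total E) n U (Phi \<circ> (tmap LL E \<circ> r))"
  proof (rule plot_cong)
    fix u assume u: "u \<in> U"
    have ue: "u \<in> euclid n" using u Ue by blast
    note tc = tmap_car[OF lin[OF u] vin[OF u] bspec[OF pr u]]
    have "a' u = snd (t (proj E (snd (r u)))) (fst (r u))"
      unfolding a'_def using diag_fst[OF ue] diag_snd[OF ue] by simp
    moreover have "Phi (tmap LL E (fst (r u), snd (r u))) = vsmul E (snd (t (proj E (snd (r u)))) (fst (r u))) (snd (r u))"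
      by (rule Phi_tmap[OF tc(4) tc(2) tc(3)])
    ultimately show "((\<lambda>av. vsmul E (fst av) (snd av)) \<circ> r') u = (Phi \<circ> (tmap LL E \<circ> r)) u"
      unfolding r'_def by simp
  qed
  moreover have "(tmap LL E \<circ> r) ` U \<subseteq> tcarrier LL E"
  proof (rule image_subsetI)
    fix u assume u: "u \<in> U"
    show "(tmap LL E \<circ> r) u \<in> tcarrier LL E"
      using tmap_car(1)[OF lin[OF u] vin[OF u] bspec[OF pr u]] by simp
  qed
  ultimately show "Pp n U (tmap LL E \<circ> r)" using dom unfolding Pp_def by simp
qed

lemma Pp_vpb: "is_vpb (TT LL E Pp)"
  unfolding is_vpb_def tp_simps(1,2,3) Lambda_simps(1)
proof (intro conjI ballI)
  show "diffeological (base E)" by (rule dX)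
  show "diffeological (tcarrier LL E, Pp)" by (rule Pp_diff)
  show "dsmooth (tcarrier LL E, Pp) (base E) fst" by (rule h_proj)
  show "fst ` fst (tcarrier LL E, Pp) = fst (base E)" using h_surj by simp
  show "vspace (fibre (TT LL E Pp) x) (vadd (TT LL E Pp)) (vsmul (TT LL E Pp)) (vzero (TT LL E Pp) x)"
    if "x \<in> fst (base E)" for x
    by (rule tp_vspace[OF xXL[OF that] VS[OF that]])
  show "dsmooth (fibred_prod (TT LL E Pp) (TT LL E Pp)) (tcarrier LL E, Pp) (\<lambda>uv. vadd (TT LL E Pp) (fst uv) (snd uv))"
    by (rule h_add)
  show "dsmooth (prod_ds real_ds (tcarrier LL E, Pp)) (tcarrier LL E, Pp) (\<lambda>av. vsmul (TT LL E Pp) (fst av) (snd av))"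
    by (rule h_smul)
  show "dsmooth (base E) (tcarrier LL E, Pp) (vzero (TT LL E Pp))" by (rule h_zero)
qed

lemma crux:
  assumes "snd (total (tensor LL E)) n U p"
  shows "snd (total E) n U (Phi \<circ> p)"
proof -
  have "\<forall>P. is_vpb (tensor_pre LL E P) \<and> dsmooth (fibred_prod LL E) (total (tensor_pre LL E P)) (tmap LL E) \<longrightarrow> P n U p"
    using assms unfolding tensor_plots by simp
  moreover have "is_vpb (TT LL E Pp) \<and> dsmooth (fibred_prod LL E) (total (TT LL E Pp)) (tmap LL E)"
    using Pp_vpb h_tmap by (simp add: tp_simps)
  ultimately have "Pp n U p" by blast
  then show ?thesis by (rule PpD(3))
qed

end


lemma sec_fst: "fst (sections_ds F) = smooth_maps (base F) (total F) \<inter> {s. \<forall>x\<in>fst (base F). proj F (s x) = x}"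
  unfolding sections_ds_def subspace_def fun_ds_def by simp

lemma sec_snd: "snd (sections_ds F) n U q \<longleftrightarrow> domain n U \<and> q ` U \<subseteq> smooth_maps (base F) (total F) \<and>
    (\<forall>m W p. snd (base F) m W p \<longrightarrow> snd (total F) (n + m) (dom_prod n U m W) (\<lambda>z. q (pfst n z) (p (psnd n z)))) \<and>
    q ` U \<subseteq> {s. \<forall>x\<in>fst (base F). proj F (s x) = x}"
  unfolding sections_ds_def subspace_def fun_ds_def by auto

lemma smooth_maps_iff: "f \<in> smooth_maps S T \<longleftrightarrow> dsmooth S T f \<and> f \<in> extensional (fst S)"
  unfolding smooth_maps_def by simp

context cov begin

lemma tens_simps: "base (tensor LL E) = base E" "proj (tensor LL E) = fst" "fst (total (tensor LL E)) = tcarrier LL E"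
  unfolding tensor_def by (simp_all add: tp_simps Lambda_simps)

lemma cov_sec:
  assumes nS: "dsmooth (sections_ds E) (sections_ds (tensor LL E)) nabla"
    and s: "s \<in> fst (sections_ds E)"
  shows "cov_deriv E nabla t s \<in> fst (sections_ds E)"
proof -
  have ns: "nabla s \<in> fst (sections_ds (tensor LL E))" by (rule dsmoothD(1)[OF nS s])
  then have nsm: "dsmooth (base E) (total (tensor LL E)) (nabla s)" and nsec: "\<forall>x\<in>fst (base E). fst (nabla s x) = x"
    unfolding sec_fst tens_simps by (auto simp: smooth_maps_iff)
  have nin: "nabla s x \<in> tcarrier LL E" if "x \<in> fst (base E)" for x
    using dsmoothD(1)[OF nsm that] tens_simps(3) by simp
  have cd: "cov_deriv E nabla t s x = Phi (nabla s x)" if "x \<in> fst (base E)" for x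
    using that unfolding cov_deriv_def by simp
  have sm: "dsmooth (base E) (total E) (cov_deriv E nabla t s)"
    unfolding dsmooth_def
  proof (intro conjI allI impI)
    show "cov_deriv E nabla t s ` fst (base E) \<subseteq> fst (total E)"
    proof (rule image_subsetI)
      fix x assume x: "x \<in> fst (base E)"
      show "cov_deriv E nabla t s x \<in> fst (total E)" using cd[OF x] Phi_in'(1)[OF nin[OF x]] by simp
    qed
  next
    fix n U p assume p: "snd (base E) n U p"
    have "snd (total E) n U (Phi \<circ> (nabla s \<circ> p))" by (rule crux[OF dsmoothD(2)[OF nsm p]])
    then show "snd (total E) n U (cov_deriv E nabla t s \<circ> p)"
    proof (rule plot_cong)
      fix u assume "u \<in> U"
      then have "p u \<in> fst (base E)" using diffD(2)[OF dX p] by auto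
      then show "(Phi \<circ> (nabla s \<circ> p)) u = (cov_deriv E nabla t s \<circ> p) u" using cd by simp
    qed
  qed
  have ext: "cov_deriv E nabla t s \<in> extensional (fst (base E))" unfolding cov_deriv_def by simp
  have sec: "\<forall>x\<in>fst (base E). proj E (cov_deriv E nabla t s x) = x"
  proof
    fix x assume x: "x \<in> fst (base E)"
    show "proj E (cov_deriv E nabla t s x) = x" using cd[OF x] Phi_in'(2)[OF nin[OF x]] nsec x by simp
  qed
  show ?thesis unfolding sec_fst using sm ext sec by (simp add: smooth_maps_iff)
qed

lemma main:
  assumes conn: "connection E nabla"
  shows "dsmooth (sections_ds E) (sections_ds E) (cov_deriv E nabla t)"
proof -
  have nS: "dsmooth (sections_ds E) (sections_ds (tensor LL E)) nabla"
    using conn[unfolded connection_def Let_def] by (rule conjunct1)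
  show ?thesis
    unfolding dsmooth_def
  proof (intro conjI allI impI)
    show "cov_deriv E nabla t ` fst (sections_ds E) \<subseteq> fst (sections_ds E)"
      using cov_sec[OF nS] by blast
  next
    fix n U q assume q: "snd (sections_ds E) n U q"
    have qin: "q u \<in> fst (sections_ds E)" if "u \<in> U" for u
      using q that unfolding sec_snd sec_fst by blast
    have nq: "snd (sections_ds (tensor LL E)) n U (nabla \<circ> q)" by (rule dsmoothD(2)[OF nS q])
    have cin: "cov_deriv E nabla t (q u) \<in> fst (sections_ds E)" if "u \<in> U" for u
      using cov_sec[OF nS qin[OF that]] .
    show "snd (sections_ds E) n U (cov_deriv E nabla t \<circ> q)"
      unfolding sec_snd
    proof (intro conjI allI impI)
      show "domain n U" using q unfolding sec_snd by blast
      show "(cov_deriv E nabla t \<circ> q) ` U \<subseteq> smooth_maps (base E) (total E)"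
        using cin unfolding sec_fst by auto
      show "(cov_deriv E nabla t \<circ> q) ` U \<subseteq> {s. \<forall>x\<in>fst (base E). proj E (s x) = x}"
        using cin unfolding sec_fst by auto
    next
      fix m W p assume p: "snd (base E) m W p"
      have "snd (total (tensor LL E)) (n + m) (dom_prod n U m W) (\<lambda>z. (nabla \<circ> q) (pfst n z) (p (psnd n z)))"
        using nq p unfolding sec_snd tens_simps by blast
      then have "snd (total E) (n + m) (dom_prod n U m W) (Phi \<circ> (\<lambda>z. (nabla \<circ> q) (pfst n z) (p (psnd n z))))"
        by (rule crux)
      then show "snd (total E) (n + m) (dom_prod n U m W) (\<lambda>z. (cov_deriv E nabla t \<circ> q) (pfst n z) (p (psnd n z)))"
      proof (rule plot_cong)
        fix z assume "z \<in> dom_prod n U m W"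
        then have "psnd n z \<in> W" unfolding dom_prod_def by auto
        then have "p (psnd n z) \<in> fst (base E)" using diffD(2)[OF dX p] by auto
        then show "(Phi \<circ> (\<lambda>z. (nabla \<circ> q) (pfst n z) (p (psnd n z)))) z = (\<lambda>z. (cov_deriv E nabla t \<circ> q) (pfst n z) (p (psnd n z))) z"
          unfolding cov_deriv_def by simp
      qed
    qed
  qed
qed

end

theorem theorem3p4:
  fixes E :: "('a, 'v) vpb"
    and nabla :: "('a \<Rightarrow> 'v) \<Rightarrow> ('a \<Rightarrow> ('a, 'v) lt)"
    and t :: "'a \<Rightarrow> 'a \<times> ('a \<times> 'a form set \<Rightarrow> real)"
  assumes "fin_dim_vpb E"
    and "connection E nabla"
    and "t \<in> fst (sections_ds (dual (Lambda (base E))))"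
  shows "dsmooth (sections_ds E) (sections_ds E) (cov_deriv E nabla t)"
proof -
  interpret cov E t using assms(1,3) by unfold_locales
  show ?thesis by (rule main[OF assms(2)])
qed


end
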